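(* Assume (A1), (A2) and (A4) below, and let $\varepsilon_\diamond$ be as below. Fix $0<\alpha<1/2$, let $\varepsilon_n=\varepsilon_\diamond n^{-\alpha}$ for $n\in\mathbb{N}_+$, and define the events $$\mathcal{E}_n=\big\{\omega:\|\mathbf{F}_{\omega,n}(\mathbf{a})-\mathbb{F}(\mathbf{a})\|_2<\varepsilon_n\ \forall\mathbf{a}\in\operatorname{cl}\mathbb{B}_R^N\big\}\cap\big\{\omega:\mathbb{A}_{-\varepsilon_n}\subseteq A_{\omega,n}\subseteq\mathbb{A}_{\varepsilon_n}\big\}.$$ Then $\mathbb{P}\{\limsup_{n\to\infty}\mathcal{E}_n^c\}=\mathbb{P}\{\mathcal{E}_n^c\text{ infinitely often}\}=0$. Consequently there exists $\tilde\Omega\subseteq\Omega$ with $\mathbb{P}(\tilde\Omega)=1$ such that for every $\omega\in\tilde\Omega$ there is $n_\omega\in\mathbb{N}_+$ with $\omega\in\mathcal{E}_n$ for all $n>n_\omega$.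
   Context: Setting. $(\Omega,\mathcal{F},\mathbb{P})$ is a probability space; $N,d\in\mathbb{N}_+$, $R>0$, $\lambda>0$. $\mathcal{X}\subseteq\mathbb{R}^{n_x}$, $\mathcal{Y}\subseteq\mathbb{R}^{n_y}$ are compact; $X:\Omega\to\mathcal{X}$, $Y:\Omega\to\mathcal{Y}$ are random variables. $\phi_1,\dots,\phi_d$ are continuous on $\mathcal{X}$, $\Phi^d(x)=[\phi_l(x)]_{l=1}^d$. $\mathbb{B}_R=\{a\in\mathbb{R}^d:\|a\|_2<R\}$, $\operatorname{cl}\mathbb{B}_R$ its closure, $\operatorname{cl}\mathbb{B}_R^N=\prod_{i=1}^N\operatorname{cl}\mathbb{B}_R\subseteq\mathbb{R}^{Nd}$. A profile $\mathbf{a}=[a^1;\dots;a^N]$, $a^i\in\mathbb{R}^d$, defines $\hat z^i(x)=\sum_l a^i_l\phi_l(x)$ and $\hat z^{-i}(x)$ (stack over $j\neq i$). $\hat{\mathcal{Z}}^i=\bigcup\{\hat z^i(\mathcal{X}):a^i\in\operatorname{cl}\mathbb{B}_R\}$, $\hat{\mathcal{Z}}=\prod_i\hat{\mathcal{Z}}^i$. Player $i$ has objective $J^i(z^i;y,z^{-i})$ (derivative $\partial J^i$ in $z^i$) and constraint $h^i:\hat{\mathcal{Z}}^i\times\mathcal{Y}\to\mathbb{R}$. $F(z;y)=[\partial J^i(z^i;y,z^{-i})]_i$; $\mathbf{F}(\mathbf{a};x,y)=[\partial J^i(\hat z^i(x);y,\hat z^{-i}(x))\Phi^d(x)]_i\in\mathbb{R}^{Nd}$;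 $\mathbb{F}^0(\mathbf{a})=\mathbb{E}[\mathbf{F}(\mathbf{a};X,Y)]$, $\mathbb{F}(\mathbf{a})=\mathbb{F}^0(\mathbf{a})+\lambda\mathbf{a}$; $\mathbf{h}^i(a^i;x,y)=h^i(\hat z^i(x);y)$; $\bar h^i(a^i)=\mathbb{E}[\mathbf{h}^i(a^i;X,Y)]$. $(X^k,Y^k)_{k\ge1}$ are i.i.d. copies of $(X,Y)$ on $\Omega$; $\mathbf{F}_{\omega,n}(\mathbf{a})=\frac1n\sum_{k=1}^n\mathbf{F}(\mathbf{a};X^k(\omega),Y^k(\omega))+\lambda\mathbf{a}$, $\mathbf{h}^i_{\omega,n}(a^i)=\frac1n\sum_{k=1}^n\mathbf{h}^i(a^i;X^k(\omega),Y^k(\omega))$. For $\varepsilon\in\mathbb{R}$: $\mathbb{A}^i_\varepsilon=\{a^i\in\operatorname{cl}\mathbb{B}_R:\bar h^i(a^i)\le\varepsilon\}$, $\mathbb{A}_\varepsilon=\prod_i\mathbb{A}^i_\varepsilon$; $A^i_{\omega,n}=\{a^i\in\operatorname{cl}\mathbb{B}_R:\mathbf{h}^i_{\omega,n}(a^i)\le0\}$, $A_{\omega,n}=\prod_iA^i_{\omega,n}$. (A1) Each $J^i(\cdot;y,z^{-i})$ is continuously differentiable. (A2) For all $y$, $F(\cdot;y)$ is $L_F$-Lipschitz on $\hat{\mathcal{Z}}$ and each $h^i(\cdot;y)$ is $L_h$-Lipschitz on $\hat{\mathcal{Z}}^i$; some $z\in\hat{\mathcal{Z}}$ has $F(z;\mathcal{Y})$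 and all $h^i(z^i;\mathcal{Y})$ bounded. (A4) There is $\varepsilon_h>0$ with $\{a^i\in\operatorname{cl}\mathbb{B}_R:\bar h^i(a^i)\le-\varepsilon_h\}\ne\varnothing$ for every $i$. The constant $\varepsilon_\diamond\in(0,\varepsilon_h)$: for every $\mathbf{a}\in\operatorname{cl}\mathbb{B}_R^N$, each centered random variable $W$ of the form $[\mathbf{F}(\mathbf{a};X,Y)]_l-[\mathbb{F}^0(\mathbf{a})]_l$ or $\mathbf{h}^i(a^i;X,Y)-\bar h^i(a^i)$, with variance $\sigma^2$, has rate function $I(u)=\sup_t\{tu-\log\mathbb{E}[e^{tW}]\}$ satisfying $I(u)\ge u^2/(3\sigma^2)$ for $0<u\le\varepsilon_\diamond$. *)

theory Defs
  imports "HOL-Probability.Probability"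
begin

text \<open>Players are indexed by a finite type 'n (N = CARD('n)), basis functions by a
finite type 'd (d = CARD('d)).  A profile a is an element of real^'d^'n, so that
a $ i is the block a^i in R^d and the norm of a is the Euclidean norm on R^(N d).\<close>

definition vupd :: "real^'n \<Rightarrow> 'n \<Rightarrow> real \<Rightarrow> real^'n" where
  "vupd z i t = (\<chi> j. if j = i then t else z $ j)"

text \<open>J i z y stands for J^i(z^i; y, z^{-i}) (the i-th entry of z is z^i).\<close>
definition dJ :: "('n \<Rightarrow> real^'n \<Rightarrow> 'y \<Rightarrow> real) \<Rightarrow> 'n \<Rightarrow> real^'n \<Rightarrow> 'y \<Rightarrow> real" where
  "dJ J i z y = deriv (\<lambda>t. J i (vupd z i t) y) (z $ i)"

definition Fz :: "('n \<Rightarrow> real^'n \<Rightarrow> 'y \<Rightarrow> real) \<Rightarrow> real^'n \<Rightarrow> 'y \<Rightarrow> real^'n" where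
  "Fz J z y = (\<chi> i. dJ J i z y)"

definition zi :: "('d::finite \<Rightarrow> 'x \<Rightarrow> real) \<Rightarrow> real^'d::finite \<Rightarrow> 'x \<Rightarrow> real" where
  "zi \<phi> ai x = (\<Sum>l\<in>UNIV. ai $ l * \<phi> l x)"

definition zhat :: "('d::finite \<Rightarrow> 'x \<Rightarrow> real) \<Rightarrow> real^'d^'n \<Rightarrow> 'x \<Rightarrow> real^'n" where
  "zhat \<phi> a x = (\<chi> i. zi \<phi> (a $ i) x)"

definition Zi :: "('d::finite \<Rightarrow> 'x \<Rightarrow> real) \<Rightarrow> 'x set \<Rightarrow> real \<Rightarrow> real set" where
  "Zi \<phi> XX R = (\<Union>ai \<in> cball (0::real^'d) R. zi \<phi> ai ` XX)"

definition Zhat :: "('d::finite \<Rightarrow> 'x \<Rightarrow> real) \<Rightarrow> 'x set \<Rightarrow> real \<Rightarrow> (real^'n) set" where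
  "Zhat \<phi> XX R = {z. \<forall>i. z $ i \<in> Zi \<phi> XX R}"

definition clBN :: "real \<Rightarrow> (real^'d^'n) set" where
  "clBN R = {a. \<forall>i. a $ i \<in> cball 0 R}"

definition Fb :: "('n \<Rightarrow> real^'n \<Rightarrow> 'y \<Rightarrow> real) \<Rightarrow> ('d::finite \<Rightarrow> 'x \<Rightarrow> real)
    \<Rightarrow> real^'d^'n \<Rightarrow> 'x \<Rightarrow> 'y \<Rightarrow> real^'d^'n" where
  "Fb J \<phi> a x y = (\<chi> i. \<chi> l. dJ J i (zhat \<phi> a x) y * \<phi> l x)"

definition FF0 where
  "FF0 M J \<phi> X Y a = integral\<^sup>L M (\<lambda>\<omega>. Fb J \<phi> a (X \<omega>) (Y \<omega>))"

definition FF where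
  "FF M J \<phi> X Y lam a = FF0 M J \<phi> X Y a + lam *\<^sub>R a"

definition hbar where
  "hbar M h \<phi> X Y i ai = integral\<^sup>L M (\<lambda>\<omega>. h i (zi \<phi> ai (X \<omega>)) (Y \<omega>))"

definition Femp where
  "Femp J \<phi> Xs Ys lam \<omega> (n::nat) a =
     (1 / real n) *\<^sub>R (\<Sum>k=1..n. Fb J \<phi> a (Xs k \<omega>) (Ys k \<omega>)) + lam *\<^sub>R a"

definition hemp where
  "hemp h \<phi> Xs Ys i \<omega> (n::nat) ai = (1 / real n) * (\<Sum>k=1..n. h i (zi \<phi> ai (Xs k \<omega>)) (Ys k \<omega>))"

definition AAeps where
  "AAeps M h \<phi> X Y R eps = {a. \<forall>i. a $ i \<in> cball 0 R \<and> hbar M h \<phi> X Y i (a $ i) \<le> eps}"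

definition Aemp where
  "Aemp h \<phi> Xs Ys R \<omega> n = {a. \<forall>i. a $ i \<in> cball 0 R \<and> hemp h \<phi> Xs Ys i \<omega> n (a $ i) \<le> 0}"

definition rate_fun :: "'a measure \<Rightarrow> ('a \<Rightarrow> real) \<Rightarrow> real \<Rightarrow> ereal" where
  "rate_fun M W u = (SUP t. ereal (t * u - ln (integral\<^sup>L M (\<lambda>\<omega>. exp (t * W \<omega>)))))"

definition var_of :: "'a measure \<Rightarrow> ('a \<Rightarrow> real) \<Rightarrow> real" where
  "var_of M W = integral\<^sup>L M (\<lambda>\<omega>. (W \<omega> - integral\<^sup>L M W)\<^sup>2)"

definition rate_lb :: "'a measure \<Rightarrow> ('a \<Rightarrow> real) \<Rightarrow> real \<Rightarrow> bool" where
  "rate_lb M W e \<longleftrightarrow>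
     (\<forall>u. 0 < u \<and> u \<le> e \<longrightarrow> rate_fun M W u \<ge> ereal (u\<^sup>2 / (3 * var_of M W)))"

definition event_E where
  "event_E M J h \<phi> X Y Xs Ys lam R epsn n =
     {\<omega> \<in> space M.
        (\<forall>a \<in> clBN R. norm (Femp J \<phi> Xs Ys lam \<omega> n a - FF M J \<phi> X Y lam a) < epsn)
      \<and> AAeps M h \<phi> X Y R (- epsn) \<subseteq> Aemp h \<phi> Xs Ys R \<omega> n
      \<and> Aemp h \<phi> Xs Ys R \<omega> n \<subseteq> AAeps M h \<phi> X Y R epsn}"

end

theory Submission
  imports Defs
begin

lemma exp_ge_pow_fact:
  fixes y :: real assumes "y \<ge> 0"
  shows "y ^ m / fact m \<le> exp y"
proof -
  have "(\<Sum>n\<in>{m}. y ^ n / fact n) \<le> (\<Sum>n. y ^ n / fact n)"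
    using assms summable_exp_generic[of y]
    by (intro sum_le_suminf) (auto simp: divide_inverse ac_simps)
  then show ?thesis by (simp add: exp_def divide_inverse ac_simps)
qed

lemma summable_pow_exp:
  fixes \<kappa> \<beta> :: real and p :: nat
  assumes "\<kappa> > 0" "\<beta> > 0"
  shows "summable (\<lambda>n. real n ^ p * exp (- \<kappa> * real n powr \<beta>))"
proof -
  obtain m :: nat where m: "real (p + 2) / \<beta> \<le> real m"
    using real_arch_simple by blast
  have mb: "real (p + 2) \<le> \<beta> * real m" using m assms by (simp add: field_simps)
  define C where "C = fact m / \<kappa> ^ m"
  have S: "summable (\<lambda>n. C * inverse (real n ^ 2))"
    by (intro summable_mult inverse_power_summable) auto
  have B: "norm (real n ^ p * exp (- \<kappa> * real n powr \<beta>)) \<le> C * inverse (real n ^ 2)" if "n \<ge> 1" for n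
  proof -
    have n0: "real n \<ge> 1" using that by simp
    have "(\<kappa> * real n powr \<beta>) ^ m / fact m \<le> exp (\<kappa> * real n powr \<beta>)"
      using assms by (intro exp_ge_pow_fact) auto
    hence e: "exp (- \<kappa> * real n powr \<beta>) \<le> fact m / (\<kappa> ^ m * real n powr (\<beta> * m))"
      using assms n0 by (simp add: exp_minus field_simps power_mult_distrib powr_powr powr_realpow[symmetric] flip: powr_powr)
    have "real n powr (real (p+2)) \<le> real n powr (\<beta> * m)"
      using n0 mb by (intro powr_mono) auto
    moreover have "real n powr real (p+2) = real n ^ (p+2)"
      using n0 by (intro powr_realpow) auto
    ultimately have pw: "real n ^ (p + 2) \<le> real n powr (\<beta> * m)" by simp
    have "real n ^ p * exp (- \<kappa> * real n powr \<beta>) \<le> real n ^ p * (fact m / (\<kappa> ^ m * real n powr (\<beta> * m)))"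
      by (intro mult_left_mono e) auto
    also have "\<dots> = C * (real n ^ p / real n powr (\<beta> * m))" by (simp add: C_def field_simps)
    also have "\<dots> \<le> C * (real n ^ p / real n ^ (p + 2))"
      using n0 pw assms unfolding C_def
      by (intro mult_left_mono divide_left_mono) (auto intro!: mult_pos_pos)
    also have "\<dots> = C * inverse (real n ^ 2)"
    proof -
      have "real n ^ p \<noteq> 0" using n0 by simp
      hence "real n ^ p / (real n ^ p * real n ^ 2) = 1 / real n ^ 2"
        by (rule nonzero_divide_mult_cancel_left)
      thus ?thesis by (simp only: power_add divide_inverse)
    qed
    finally show ?thesis by simp
  qed
  show ?thesis
    by (rule summable_comparison_test'[OF S B]) simp
qed

lemma grid_net:
  fixes r \<delta> :: real
  assumes \<delta>: "\<delta> > 0" and r: "r \<ge> 0"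
  shows "\<exists>G::'a::euclidean_space set. finite G \<and> card G \<le> (2 * nat \<lceil>r / \<delta>\<rceil> + 1) ^ DIM('a)
           \<and> (\<forall>a. norm a \<le> r \<longrightarrow> (\<exists>g\<in>G. norm (a - g) \<le> DIM('a) * \<delta>))"
proof -
  define K where "K = nat \<lceil>r / \<delta>\<rceil>"
  define G1 where "G1 = (\<lambda>k. \<delta> * of_int k) ` {- int K..int K}"
  define G where "G = {p::'a. \<forall>b\<in>Basis. p \<bullet> b \<in> G1}"
  have fG1: "finite G1" and cG1: "card G1 \<le> 2 * K + 1"
    unfolding G1_def using card_image_le[of "{- int K..int K}" "\<lambda>k. \<delta> * of_int k"] by auto
  have inj: "inj_on (\<lambda>p. restrict (\<lambda>b. p \<bullet> b) Basis) G"
  proof (rule inj_onI)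
    fix p q assume "p \<in> G" "q \<in> G" "restrict (\<lambda>b. p \<bullet> b) Basis = restrict (\<lambda>b. q \<bullet> b) Basis"
    hence "\<forall>b\<in>Basis. p \<bullet> b = q \<bullet> b" by (metis restrict_apply')
    thus "p = q" using euclidean_eq_iff[of p q] by blast
  qed
  have sub: "(\<lambda>p. restrict (\<lambda>b. p \<bullet> b) Basis) ` G \<subseteq> PiE Basis (\<lambda>_. G1)"
    unfolding G_def by auto
  have fPi: "finite (PiE Basis (\<lambda>_::'a. G1))" using fG1 by (intro finite_PiE) auto
  have fG: "finite G"
    using finite_imageD[OF finite_subset[OF sub fPi] inj] .
  have "card G = card ((\<lambda>p. restrict (\<lambda>b. p \<bullet> b) Basis) ` G)"
    using card_image[OF inj] by simp
  also have "\<dots> \<le> card (PiE Basis (\<lambda>_::'a. G1))"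
    by (rule card_mono[OF fPi sub])
  also have "\<dots> = card G1 ^ DIM('a)"
    by (simp add: card_PiE)
  also have "\<dots> \<le> (2 * K + 1) ^ DIM('a)"
    by (intro power_mono cG1) auto
  finally have cG: "card G \<le> (2 * K + 1) ^ DIM('a)" .
  have cov: "\<exists>g\<in>G. norm (a - g) \<le> DIM('a) * \<delta>" if a: "norm a \<le> r" for a :: 'a
  proof -
    define p where "p = (\<Sum>b\<in>Basis. (\<delta> * of_int (round (a \<bullet> b / \<delta>))) *\<^sub>R b)"
    have pb: "p \<bullet> b = \<delta> * of_int (round (a \<bullet> b / \<delta>))" if "b \<in> Basis" for b
      unfolding p_def using that by (simp add: inner_sum_left_Basis)
    have "p \<in> G"
      unfolding G_def mem_Collect_eq
    proof (intro ballI)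
      fix b :: 'a assume b: "b \<in> Basis"
      have "\<bar>a \<bullet> b\<bar> \<le> r" using Basis_le_norm[OF b, of a] a by linarith
      hence "\<bar>a \<bullet> b\<bar> / \<delta> \<le> r / \<delta>" using \<delta> by (intro divide_right_mono) auto
      also have "\<dots> \<le> real K" unfolding K_def using le_of_int_ceiling[of "r/\<delta>"] by linarith
      finally have x: "\<bar>a \<bullet> b / \<delta>\<bar> \<le> real K" using \<delta> by simp
      have "round (a \<bullet> b / \<delta>) \<le> round (real K)" using x unfolding abs_le_iff by (intro round_mono) linarith
      hence u: "round (a \<bullet> b / \<delta>) \<le> int K" by simp
      have "round (real_of_int (- int K)) \<le> round (a \<bullet> b / \<delta>)" using x unfolding abs_le_iff by (intro round_mono) simp
      hence l: "- int K \<le> round (a \<bullet> b / \<delta>)" by (simp only: round_of_int)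
      show "p \<bullet> b \<in> G1" unfolding G1_def pb[OF b] using u l by auto
    qed
    moreover have "norm (a - p) \<le> DIM('a) * \<delta>"
    proof -
      have "norm (a - p) \<le> (\<Sum>b\<in>Basis. \<bar>(a - p) \<bullet> b\<bar>)" by (rule norm_le_l1)
      also have "\<dots> \<le> (\<Sum>b\<in>(Basis::'a set). \<delta>)"
      proof (rule sum_mono)
        fix b :: 'a assume b: "b \<in> Basis"
        have "\<bar>of_int (round (a \<bullet> b / \<delta>)) - a \<bullet> b / \<delta>\<bar> \<le> 1/2" by (rule of_int_round_abs_le)
        hence "\<bar>\<delta> * of_int (round (a \<bullet> b / \<delta>)) - a \<bullet> b\<bar> \<le> \<delta> / 2"
          using \<delta> by (simp add: field_simps abs_le_iff)
        thus "\<bar>(a - p) \<bullet> b\<bar> \<le> \<delta>" using pb[OF b] \<delta> unfolding inner_diff_left abs_le_iff by linarith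
      qed
      also have "\<dots> = DIM('a) * \<delta>" by simp
      finally show ?thesis .
    qed
    ultimately show ?thesis by blast
  qed
  show ?thesis using fG cG cov unfolding K_def by blast
qed

lemma net_in_S:
  fixes S :: "'a::euclidean_space set" and r \<delta> :: real
  assumes cS: "convex S" and clS: "closed S" and ne: "S \<noteq> {}" and Sr: "S \<subseteq> cball 0 r"
    and \<delta>: "\<delta> > 0"
  shows "\<exists>N. N \<subseteq> S \<and> finite N \<and> card N \<le> (2 * nat \<lceil>r / \<delta>\<rceil> + 1) ^ DIM('a)
           \<and> (\<forall>a\<in>S. \<exists>g\<in>N. norm (a - g) \<le> DIM('a) * \<delta>)"
proof -
  from ne obtain s where "s \<in> S" by blast
  hence r: "r \<ge> 0" using Sr by (metis mem_cball_0 norm_ge_zero order_trans subsetD)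
  have "\<exists>G::'a set. finite G \<and> card G \<le> (2 * nat \<lceil>r / \<delta>\<rceil> + 1) ^ DIM('a)
           \<and> (\<forall>a. norm a \<le> r \<longrightarrow> (\<exists>g\<in>G. norm (a - g) \<le> DIM('a) * \<delta>))"
    by (rule grid_net) (use \<delta> r in auto)
  then obtain G :: "'a set" where fG: "finite G" and cG: "card G \<le> (2 * nat \<lceil>r / \<delta>\<rceil> + 1) ^ DIM('a)"
    and cov: "\<forall>a. norm a \<le> r \<longrightarrow> (\<exists>g\<in>G. norm (a - g) \<le> DIM('a) * \<delta>)"
    by blast
  define N where "N = closest_point S ` G"
  have "N \<subseteq> S" unfolding N_def using closest_point_in_set[OF clS ne] by blast
  moreover have "finite N" unfolding N_def using fG by simp
  moreover have "card N \<le> (2 * nat \<lceil>r / \<delta>\<rceil> + 1) ^ DIM('a)"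
    unfolding N_def using card_image_le[OF fG, of "closest_point S"] cG by linarith
  moreover have "\<exists>g\<in>N. norm (a - g) \<le> DIM('a) * \<delta>" if a: "a \<in> S" for a
  proof -
    have "norm a \<le> r" using a Sr by auto
    then obtain g where g: "g \<in> G" "norm (a - g) \<le> DIM('a) * \<delta>" using cov by blast
    have "dist (closest_point S a) (closest_point S g) \<le> dist a g"
      by (rule closest_point_lipschitz[OF cS clS ne])
    hence "norm (a - closest_point S g) \<le> DIM('a) * \<delta>"
      using g closest_point_self[OF a] by (simp add: dist_norm)
    thus ?thesis using g unfolding N_def by blast
  qed
  ultimately show ?thesis by blast
qed

lemma carath_meas:
  fixes F :: "'z::euclidean_space \<Rightarrow> 'y::euclidean_space \<Rightarrow> real" and K :: "'z set" and YY :: "'y set"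
  assumes K: "compact K" and YY: "closed YY"
    and cont: "\<And>y. y \<in> YY \<Longrightarrow> continuous_on K (\<lambda>z. F z y)"
    and meas: "\<And>z. z \<in> K \<Longrightarrow> F z \<in> borel_measurable borel"
  shows "(\<lambda>p. if fst p \<in> K \<and> snd p \<in> YY then F (fst p) (snd p) else 0) \<in> borel_measurable borel"
proof -
  have "\<exists>C. C \<subseteq> K \<and> finite C \<and> K \<subseteq> (\<Union>c\<in>C. ball c (1 / Suc m))" for m :: nat
  proof -
    have "K \<subseteq> (\<Union>c\<in>K. ball c (1 / Suc m))" by auto
    from compactE_image[OF K _ this] show ?thesis by (metis open_ball)
  qed
  then obtain C where C: "\<And>m. C m \<subseteq> K" "\<And>m. finite (C m)" "\<And>m. K \<subseteq> (\<Union>c\<in>C m. ball c (1 / Suc m))"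
    by metis
  define u where "u m p = (if p \<in> K \<times> YY then
      (\<Sum>c\<in>C m. indicator (ball c (1 / Suc m)) (fst p) * F c (snd p)) /
      (\<Sum>c\<in>C m. indicator (ball c (1 / Suc m)) (fst p)) else (0::real))" for m p
  have fstm: "fst \<in> borel_measurable (borel :: ('z \<times> 'y) measure)"
    by (intro borel_measurable_continuous_onI continuous_intros)
  have sndm: "snd \<in> borel_measurable (borel :: ('z \<times> 'y) measure)"
    by (intro borel_measurable_continuous_onI continuous_intros)
  have KY: "K \<times> YY \<in> sets borel"
    using compact_imp_closed[OF K] YY by (intro borel_closed closed_Times)
  have um: "u m \<in> borel_measurable borel" for m
  proof -
    have i: "(\<lambda>p::'z \<times> 'y. indicator (ball c (1 / Suc m)) (fst p) :: real) \<in> borel_measurable borel" for c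
      using measurable_compose[OF fstm borel_measurable_indicator[OF borel_open[OF open_ball]]] by (simp add: o_def)
    have f: "(\<lambda>p::'z \<times> 'y. F c (snd p)) \<in> borel_measurable borel" if "c \<in> K" for c
      using measurable_compose[OF sndm meas[OF that]] by (simp add: o_def)
    show ?thesis unfolding u_def
      using C(1)[of m] i f KY
      by (intro measurable_If_set borel_measurable_divide borel_measurable_sum borel_measurable_times) auto
  qed
  show ?thesis
  proof (rule borel_measurable_LIMSEQ_real[OF _ um])
    fix p :: "'z \<times> 'y"
    show "(\<lambda>m. u m p) \<longlonglongrightarrow> (if fst p \<in> K \<and> snd p \<in> YY then F (fst p) (snd p) else 0)"
    proof (cases "p \<in> K \<times> YY")
      case False
      thus ?thesis unfolding u_def by (auto simp: mem_Times_iff)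
    next
      case True
      obtain z y where p: "p = (z, y)" by force
      with True have z: "z \<in> K" and y: "y \<in> YY" by auto
      show ?thesis unfolding p fst_conv snd_conv using z y
      proof (simp, intro LIMSEQ_I)
        fix r :: real assume r: "r > 0"
        obtain d where d: "d > 0" "\<forall>c\<in>K. dist c z < d \<longrightarrow> dist (F c y) (F z y) < r / 2"
          using cont[OF y] z r unfolding continuous_on_iff by (metis half_gt_zero)
        obtain no :: nat where n: "no > 0" "inverse (real no) < d"
          using ex_inverse_of_nat_less[OF d(1)] by blast
        have "1 / real (Suc no) \<le> inverse (real no)" using n by (simp add: field_simps)
        hence no: "1 / real (Suc no) < d" using n by linarith
        show "\<exists>no. \<forall>m\<ge>no. norm (u m (z, y) - F z y) < r"
        proof (intro exI allI impI)
          fix m assume m: "m \<ge> no"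
          define \<rho> where "\<rho> = 1 / real (Suc m)"
          have \<rho>d: "\<rho> < d"
          proof -
            have "1 / real (Suc m) \<le> 1 / real (Suc no)" using m by (intro divide_left_mono) auto
            thus ?thesis using no unfolding \<rho>_def by linarith
          qed
          define T where "T = {c \<in> C m. z \<in> ball c \<rho>}"
          have fT: "finite T" unfolding T_def using C(2) by auto
          have neT: "T \<noteq> {}" using C(3)[of m] z unfolding T_def \<rho>_def by blast
          have s1: "(\<Sum>c\<in>C m. indicator (ball c \<rho>) z * F c y) = (\<Sum>c\<in>T. F c y)"
            unfolding T_def by (subst sum.inter_filter[OF C(2)]) (auto simp: indicator_def of_bool_def intro!: sum.cong)
          have s2: "(\<Sum>c\<in>C m. indicator (ball c \<rho>) z :: real) = real (card T)"
          proof -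
            have "real (card T) = (\<Sum>c\<in>T. 1::real)" by simp
            also have "\<dots> = (\<Sum>c\<in>C m. indicator (ball c \<rho>) z)"
              unfolding T_def by (subst sum.inter_filter[OF C(2)]) (auto simp: indicator_def of_bool_def intro!: sum.cong)
            finally show ?thesis by simp
          qed
          have uu: "u m (z, y) = (\<Sum>c\<in>T. F c y) / real (card T)"
            unfolding u_def using z y s1 s2 \<rho>_def by simp
          have cT: "real (card T) > 0" using fT neT by (simp add: card_gt_0_iff)
          have bnd: "\<bar>F c y - F z y\<bar> < r / 2" if "c \<in> T" for c
          proof -
            have "c \<in> K" "dist c z < d" using that C(1)[of m] \<rho>d unfolding T_def
              by (auto simp: dist_commute)
            thus ?thesis using d(2) by (auto simp: dist_real_def)
          qed
          have e: "u m (z, y) - F z y = (\<Sum>c\<in>T. F c y - F z y) / real (card T)"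
            using cT uu by (simp add: sum_subtractf field_simps)
          have sb: "\<bar>\<Sum>c\<in>T. F c y - F z y\<bar> \<le> real (card T) * (r / 2)"
          proof -
            have "\<bar>\<Sum>c\<in>T. F c y - F z y\<bar> \<le> (\<Sum>c\<in>T. \<bar>F c y - F z y\<bar>)" by (rule sum_abs)
            also have "\<dots> \<le> (\<Sum>c\<in>T. r / 2)" using bnd by (intro sum_mono) (simp add: less_imp_le)
            finally show ?thesis by simp
          qed
          have "\<bar>u m (z, y) - F z y\<bar> = \<bar>\<Sum>c\<in>T. F c y - F z y\<bar> / real (card T)"
            unfolding e using cT by (simp add: abs_divide)
          also have "\<dots> \<le> (real (card T) * (r / 2)) / real (card T)"
            using sb cT by (intro divide_right_mono) auto
          also have "\<dots> = r / 2" using cT by simp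
          finally have "\<bar>u m (z, y) - F z y\<bar> \<le> r / 2" .
          thus "norm (u m (z, y) - F z y) < r" using r by simp
        qed
      qed
    qed
  qed
qed

lemma hoeffding_one:
  fixes M :: "'w measure" and Z :: "nat \<Rightarrow> 'w \<Rightarrow> real" and Z0 :: "'w \<Rightarrow> real"
  assumes P: "prob_space M"
    and indep: "prob_space.indep_vars M (\<lambda>_. borel) Z {1..}"
    and distr: "\<And>k. k \<ge> 1 \<Longrightarrow> distr M borel (Z k) = distr M borel Z0"
    and Z0m: "Z0 \<in> borel_measurable M"
    and bd: "\<And>\<omega>. \<omega> \<in> space M \<Longrightarrow> \<bar>Z0 \<omega>\<bar> \<le> B"
    and B: "B > 0" and n: "n \<ge> 1" and t: "t \<ge> 0"
  shows "measure M {\<omega> \<in> space M. t \<le> \<bar>(\<Sum>k\<in>{1..n}. Z k \<omega>) / real n - integral\<^sup>L M Z0\<bar>}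
           \<le> 2 * exp (- (real n * t\<^sup>2) / (2 * B\<^sup>2))"
proof -
  interpret prob_space M by (rule P)
  have H: "Hoeffding_ineq_iid M {1..n} Z Z0 (-B) B"
    unfolding Hoeffding_ineq_iid_def iid_interval_bounded_random_variables_def
      iid_interval_bounded_random_variables_axioms_def
  proof (intro conjI ballI allI impI)
    show "prob_space M" by (rule P)
    show "finite {1..n}" by simp
    show "indep_vars (\<lambda>_. borel) Z {1..n}"
      by (rule indep_vars_subset[OF indep]) auto
    show "distr M borel (Z i) = distr M borel Z0" if "i \<in> {1..n}" for i
      using that distr by auto
    show "random_variable borel Z0" by (rule Z0m)
    show "AE x in M. Z0 x \<in> {- B..B}"
    proof (intro AE_I2)
      fix x assume "x \<in> space M"
      from bd[OF this] show "Z0 x \<in> {- B..B}" by (simp add: abs_le_iff)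
    qed
  qed
  have "measure M {\<omega> \<in> space M. t \<le> \<bar>(\<Sum>k\<in>{1..n}. Z k \<omega>) / real (card {1..n}) - integral\<^sup>L M Z0\<bar>}
      \<le> 2 * exp (- 2 * real (card {1..n}) * t\<^sup>2 / (B - - B)\<^sup>2)"
    using Hoeffding_ineq_iid.Hoeffding_ineq_abs_ge'[OF H t] B n by auto
  also have "- 2 * real (card {1..n}) * t\<^sup>2 / (B - - B)\<^sup>2 = - (real n * t\<^sup>2) / (2 * B\<^sup>2)"
    using B by (simp add: power2_eq_square field_simps)
  finally show ?thesis by simp
qed

lemma uniform_slln:
  fixes M :: "'w measure" and f :: "'a::euclidean_space \<Rightarrow> 'x::euclidean_space \<Rightarrow> 'y::euclidean_space \<Rightarrow> real"
    and S :: "'a set" and XX :: "'x set" and YY :: "'y set"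
    and X :: "'w \<Rightarrow> 'x" and Y :: "'w \<Rightarrow> 'y" and Xs :: "nat \<Rightarrow> 'w \<Rightarrow> 'x" and Ys :: "nat \<Rightarrow> 'w \<Rightarrow> 'y"
    and r B L \<eta> \<epsilon>d \<alpha> :: real
  assumes P: "prob_space M"
    and cS: "convex S" and clS: "closed S" and neS: "S \<noteq> {}" and Sr: "S \<subseteq> cball 0 r"
    and Xrv: "X \<in> borel_measurable M" and Xval: "\<forall>\<omega>\<in>space M. X \<omega> \<in> XX"
    and Yrv: "Y \<in> borel_measurable M" and Yval: "\<forall>\<omega>\<in>space M. Y \<omega> \<in> YY"
    and Xsrv: "\<forall>k. Xs k \<in> borel_measurable M" and Xsval: "\<forall>k. \<forall>\<omega>\<in>space M. Xs k \<omega> \<in> XX"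
    and Ysrv: "\<forall>k. Ys k \<in> borel_measurable M" and Ysval: "\<forall>k. \<forall>\<omega>\<in>space M. Ys k \<omega> \<in> YY"
    and indep: "prob_space.indep_vars M (\<lambda>_. borel) (\<lambda>k \<omega>. (Xs k \<omega>, Ys k \<omega>)) {1..}"
    and ident: "\<forall>k\<ge>1. distr M borel (\<lambda>\<omega>. (Xs k \<omega>, Ys k \<omega>)) = distr M borel (\<lambda>\<omega>. (X \<omega>, Y \<omega>))"
    and fmeas: "\<And>a. a \<in> S \<Longrightarrow> (\<lambda>p. if fst p \<in> XX \<and> snd p \<in> YY then f a (fst p) (snd p) else 0) \<in> borel_measurable borel"
    and fbd: "\<And>a x y. a \<in> S \<Longrightarrow> x \<in> XX \<Longrightarrow> y \<in> YY \<Longrightarrow> \<bar>f a x y\<bar> \<le> B"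
    and flip: "\<And>a b x y. a \<in> S \<Longrightarrow> b \<in> S \<Longrightarrow> x \<in> XX \<Longrightarrow> y \<in> YY \<Longrightarrow> \<bar>f a x y - f b x y\<bar> \<le> L * norm (a - b)"
    and \<eta>: "\<eta> > 0" and \<epsilon>d: "\<epsilon>d > 0" and \<alpha>: "0 < \<alpha>" "\<alpha> < 1/2"
  shows "AE \<omega> in M. eventually (\<lambda>n. \<forall>a\<in>S. \<bar>(1 / real n) * (\<Sum>k=1..n. f a (Xs k \<omega>) (Ys k \<omega>))
            - (\<integral>\<omega>'. f a (X \<omega>') (Y \<omega>') \<partial>M)\<bar> < \<eta> * (\<epsilon>d * real n powr (- \<alpha>))) sequentially"
proof -
  interpret prob_space M by (rule P)
  from neS obtain s where "s \<in> S" by blast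
  hence r: "r \<ge> 0" using Sr by (metis mem_cball_0 norm_ge_zero order_trans subsetD)
  define B' where "B' = \<bar>B\<bar> + 1"
  define L' where "L' = \<bar>L\<bar> + 1"
  define D where "D = DIM('a)"
  have B': "B' > 0" and L': "L' > 0" and D: "real D > 0" by (auto simp: B'_def L'_def D_def)
  define c0 where "c0 = \<eta> * \<epsilon>d / (4 * L' * real D)"
  have c0: "c0 > 0" unfolding c0_def using \<eta> \<epsilon>d L' D by auto
  define \<delta> where "\<delta> n = c0 * real n powr (- \<alpha>)" for n :: nat
  define t where "t n = \<eta> * (\<epsilon>d * real n powr (- \<alpha>)) / 2" for n :: nat
  have \<delta>pos: "\<delta> n > 0" if "n \<ge> 1" for n using that c0 unfolding \<delta>_def by auto
  have tnn: "t n \<ge> 0" for n using \<eta> \<epsilon>d unfolding t_def by auto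
  have "\<exists>N. N \<subseteq> S \<and> finite N \<and> (n \<ge> 1 \<longrightarrow> card N \<le> (2 * nat \<lceil>r / \<delta> n\<rceil> + 1) ^ D
           \<and> (\<forall>a\<in>S. \<exists>g\<in>N. norm (a - g) \<le> D * \<delta> n))" for n
  proof (cases "n \<ge> 1")
    case True
    from net_in_S[OF cS clS neS Sr \<delta>pos[OF True]] show ?thesis unfolding D_def by blast
  next
    case False
    show ?thesis by (rule exI[of _ "{}"]) (use False in auto)
  qed
  then obtain N where N: "\<And>n. N n \<subseteq> S" "\<And>n. finite (N n)"
    "\<And>n. n \<ge> 1 \<Longrightarrow> card (N n) \<le> (2 * nat \<lceil>r / \<delta> n\<rceil> + 1) ^ D"
    "\<And>n. n \<ge> 1 \<Longrightarrow> \<forall>a\<in>S. \<exists>g\<in>N n. norm (a - g) \<le> D * \<delta> n"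
    by metis
  define f' where "f' a p = (if fst p \<in> XX \<and> snd p \<in> YY then f a (fst p) (snd p) else 0)" for a p
  define Z where "Z a k \<omega> = f' a (Xs k \<omega>, Ys k \<omega>)" for a k \<omega>
  define Z0 where "Z0 a \<omega> = f' a (X \<omega>, Y \<omega>)" for a \<omega>
  have pairm: "(\<lambda>\<omega>. (Xs k \<omega>, Ys k \<omega>)) \<in> borel_measurable M" for k
    using Xsrv Ysrv by (intro borel_measurable_Pair) auto
  have pair0: "(\<lambda>\<omega>. (X \<omega>, Y \<omega>)) \<in> borel_measurable M"
    using Xrv Yrv by (intro borel_measurable_Pair) auto
  have f'm: "f' a \<in> borel_measurable borel" if "a \<in> S" for a
    using fmeas[OF that] unfolding f'_def by simp
  have Zm: "Z a k \<in> borel_measurable M" if "a \<in> S" for a k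
    using measurable_compose[OF pairm f'm[OF that]] unfolding Z_def by simp
  have Z0m: "Z0 a \<in> borel_measurable M" if "a \<in> S" for a
    using measurable_compose[OF pair0 f'm[OF that]] unfolding Z0_def by simp
  have Zeq: "Z a k \<omega> = f a (Xs k \<omega>) (Ys k \<omega>)" if "\<omega> \<in> space M" for a k \<omega>
    using that Xsval Ysval unfolding Z_def f'_def by auto
  have Z0eq: "Z0 a \<omega> = f a (X \<omega>) (Y \<omega>)" if "\<omega> \<in> space M" for a \<omega>
    using that Xval Yval unfolding Z0_def f'_def by auto
  have Z0bd: "\<bar>Z0 a \<omega>\<bar> \<le> B'" if "a \<in> S" "\<omega> \<in> space M" for a \<omega>
    using fbd[OF that(1)] Xval Yval that unfolding Z0eq[OF that(2)] B'_def by force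
  have Z0int: "integrable M (Z0 a)" if "a \<in> S" for a
    by (rule integrable_const_bound[where B=B']) (use Z0bd[OF that] Z0m[OF that] in auto)
  have indepZ: "indep_vars (\<lambda>_. borel) (Z a) {1..}" if "a \<in> S" for a
    using indep_vars_compose2[OF indep, of "\<lambda>_. f' a" "\<lambda>_. borel"] f'm[OF that] unfolding Z_def by simp
  have distrZ: "distr M borel (Z a k) = distr M borel (Z0 a)" if "a \<in> S" "k \<ge> 1" for a k
  proof -
    have "distr M borel (Z a k) = distr (distr M borel (\<lambda>\<omega>. (Xs k \<omega>, Ys k \<omega>))) borel (f' a)"
      using distr_distr[OF f'm[OF that(1)] pairm[of k]] unfolding Z_def by (simp add: o_def)
    also have "\<dots> = distr (distr M borel (\<lambda>\<omega>. (X \<omega>, Y \<omega>))) borel (f' a)"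
      using ident that(2) by simp
    also have "\<dots> = distr M borel (Z0 a)"
      using distr_distr[OF f'm[OF that(1)] pair0] unfolding Z0_def by (simp add: o_def)
    finally show ?thesis .
  qed
  define A where "A n = (\<Union>g\<in>N n. {\<omega> \<in> space M. t n \<le> \<bar>(\<Sum>k\<in>{1..n}. Z g k \<omega>) / real n - integral\<^sup>L M (Z0 g)\<bar>})" for n
  have Am: "A n \<in> sets M" for n
  proof -
    have "{\<omega> \<in> space M. t n \<le> \<bar>(\<Sum>k\<in>{1..n}. Z g k \<omega>) / real n - integral\<^sup>L M (Z0 g)\<bar>} \<in> sets M" if "g \<in> S" for g
      using Zm[OF that] by measurable
    thus ?thesis unfolding A_def using N(1,2)[of n] by (intro sets.finite_UN) auto
  qed

  define \<kappa> where "\<kappa> = (\<eta> * \<epsilon>d)\<^sup>2 / (8 * B'\<^sup>2)"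
  define \<beta> where "\<beta> = 1 - 2 * \<alpha>"
  define Cc where "Cc = 2 * r / c0 + 3"
  have \<kappa>: "\<kappa> > 0" unfolding \<kappa>_def using \<eta> \<epsilon>d B' by auto
  have \<beta>: "\<beta> > 0" unfolding \<beta>_def using \<alpha> by auto
  have Cc: "Cc > 0" unfolding Cc_def using divide_nonneg_pos[of "2*r" c0] r c0 by linarith
  have expo: "- (real n * (t n)\<^sup>2) / (2 * B'\<^sup>2) = - \<kappa> * real n powr \<beta>" if n: "n \<ge> 1" for n
  proof -
    have np: "real n > 0" using n by simp
    have "(real n powr (- \<alpha>))\<^sup>2 = real n powr (- \<alpha> + - \<alpha>)"
      by (simp only: power2_eq_square powr_add[symmetric])
    moreover have "real n * real n powr (- \<alpha> + - \<alpha>) = real n powr \<beta>"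
    proof -
      have "real n powr (1 + (- \<alpha> + - \<alpha>)) = real n powr 1 * real n powr (- \<alpha> + - \<alpha>)"
        by (rule powr_add)
      moreover have "1 + (- \<alpha> + - \<alpha>) = \<beta>" unfolding \<beta>_def by simp
      ultimately show ?thesis using np by simp
    qed
    ultimately have "real n * (t n)\<^sup>2 = (\<eta> * \<epsilon>d)\<^sup>2 / 4 * real n powr \<beta>"
      unfolding t_def by (simp add: power_mult_distrib power_divide field_simps)
    thus ?thesis unfolding \<kappa>_def using B' by (simp add: field_simps)
  qed
  have cardb: "real (card (N n)) \<le> Cc ^ D * real n ^ D" if n: "n \<ge> 1" for n
  proof -
    have n1: "real n \<ge> 1" using n by simp
    have "r / \<delta> n = (r / c0) * real n powr \<alpha>"
      unfolding \<delta>_def using n1 c0 by (simp add: powr_minus field_simps)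
    also have "\<dots> \<le> (r / c0) * real n"
    proof -
      have "real n powr \<alpha> \<le> real n powr 1" using \<alpha> n1 by (intro powr_mono) auto
      thus ?thesis using r c0 n1 by (intro mult_left_mono) auto
    qed
    finally have x: "r / \<delta> n \<le> (r / c0) * real n" .
    have x0: "r / \<delta> n \<ge> 0" using r \<delta>pos[OF n] by simp
    have "real (nat \<lceil>r / \<delta> n\<rceil>) \<le> r / \<delta> n + 1"
      using x0 of_int_ceiling_le_add_one[of "r / \<delta> n"] by (simp add: of_nat_nat)
    hence "real (2 * nat \<lceil>r / \<delta> n\<rceil> + 1) \<le> 2 * ((r / c0) * real n) + 3"
      using x by simp
    also have "\<dots> \<le> Cc * real n"
      unfolding Cc_def using n1 r c0 by (simp add: field_simps)
    finally have b1: "real (2 * nat \<lceil>r / \<delta> n\<rceil> + 1) \<le> Cc * real n" .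
    have "real (card (N n)) \<le> real ((2 * nat \<lceil>r / \<delta> n\<rceil> + 1) ^ D)"
      using N(3)[OF n] by linarith
    also have "\<dots> = real (2 * nat \<lceil>r / \<delta> n\<rceil> + 1) ^ D" by simp
    also have "\<dots> \<le> (Cc * real n) ^ D" by (intro power_mono b1) auto
    finally show ?thesis by (simp add: power_mult_distrib)
  qed
  have Ab: "measure M (A n) \<le> 2 * Cc ^ D * (real n ^ D * exp (- \<kappa> * real n powr \<beta>))" if n: "n \<ge> 1" for n
  proof -
    have "measure M (A n) \<le> (\<Sum>g\<in>N n. measure M {\<omega> \<in> space M. t n \<le> \<bar>(\<Sum>k\<in>{1..n}. Z g k \<omega>) / real n - integral\<^sup>L M (Z0 g)\<bar>})"
      unfolding A_def
    proof (rule measure_UNION_le[OF N(2)])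
      fix g assume "g \<in> N n"
      hence "g \<in> S" using N(1) by auto
      thus "{\<omega> \<in> space M. t n \<le> \<bar>(\<Sum>k\<in>{1..n}. Z g k \<omega>) / real n - integral\<^sup>L M (Z0 g)\<bar>} \<in> sets M"
        using Zm[OF \<open>g \<in> S\<close>] by measurable
    qed
    also have "\<dots> \<le> (\<Sum>g\<in>N n. 2 * exp (- (real n * (t n)\<^sup>2) / (2 * B'\<^sup>2)))"
    proof (rule sum_mono)
      fix g assume "g \<in> N n"
      hence g: "g \<in> S" using N(1) by auto
      show "measure M {\<omega> \<in> space M. t n \<le> \<bar>(\<Sum>k\<in>{1..n}. Z g k \<omega>) / real n - integral\<^sup>L M (Z0 g)\<bar>}
          \<le> 2 * exp (- (real n * (t n)\<^sup>2) / (2 * B'\<^sup>2))"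
        by (rule hoeffding_one[OF P indepZ[OF g] distrZ[OF g] Z0m[OF g] Z0bd[OF g] B' n tnn])
    qed
    also have "\<dots> = real (card (N n)) * (2 * exp (- \<kappa> * real n powr \<beta>))"
      using expo[OF n] by simp
    also have "\<dots> \<le> (Cc ^ D * real n ^ D) * (2 * exp (- \<kappa> * real n powr \<beta>))"
      by (intro mult_right_mono cardb[OF n]) auto
    finally show ?thesis by (simp add: ac_simps)
  qed
  have summ: "summable (\<lambda>n. measure M (A n))"
  proof (rule summable_comparison_test'[where N=1])
    show "summable (\<lambda>n. 2 * Cc ^ D * (real n ^ D * exp (- \<kappa> * real n powr \<beta>)))"
      by (intro summable_mult summable_pow_exp \<kappa> \<beta>)
    show "norm (measure M (A n)) \<le> 2 * Cc ^ D * (real n ^ D * exp (- \<kappa> * real n powr \<beta>))" if "n \<ge> 1" for n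
      using Ab[OF that] by simp
  qed
  have BC: "AE \<omega> in M. eventually (\<lambda>n. \<omega> \<in> space M - A n) sequentially"
    by (rule borel_cantelli_AE1[OF Am _ summ]) (simp add: less_top[symmetric])
  have good: "\<forall>a\<in>S. \<bar>(1 / real n) * (\<Sum>k=1..n. f a (Xs k \<omega>) (Ys k \<omega>))
            - (\<integral>\<omega>'. f a (X \<omega>') (Y \<omega>') \<partial>M)\<bar> < \<eta> * (\<epsilon>d * real n powr (- \<alpha>))"
    if \<omega>: "\<omega> \<in> space M" and nA: "\<omega> \<notin> A n" and n: "n \<ge> 1" for \<omega> n
  proof
    fix a assume a: "a \<in> S"
    have np: "real n > 0" using n by simp
    obtain g where g: "g \<in> N n" "norm (a - g) \<le> D * \<delta> n" using N(4)[OF n] a by blast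
    have gS: "g \<in> S" using g(1) N(1) by auto
    define ma where "ma = (1 / real n) * (\<Sum>k=1..n. f a (Xs k \<omega>) (Ys k \<omega>))"
    define mg where "mg = (1 / real n) * (\<Sum>k=1..n. f g (Xs k \<omega>) (Ys k \<omega>))"
    have ia: "(\<integral>\<omega>'. f a (X \<omega>') (Y \<omega>') \<partial>M) = integral\<^sup>L M (Z0 a)"
      by (intro Bochner_Integration.integral_cong) (auto simp: Z0eq)
    have ig: "(\<integral>\<omega>'. f g (X \<omega>') (Y \<omega>') \<partial>M) = integral\<^sup>L M (Z0 g)"
      by (intro Bochner_Integration.integral_cong) (auto simp: Z0eq)
    have "\<not> t n \<le> \<bar>(\<Sum>k\<in>{1..n}. Z g k \<omega>) / real n - integral\<^sup>L M (Z0 g)\<bar>"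
      using nA g(1) \<omega> unfolding A_def by blast
    moreover have "(\<Sum>k\<in>{1..n}. Z g k \<omega>) / real n = mg"
      unfolding mg_def using Zeq[OF \<omega>] by simp
    ultimately have dg: "\<bar>mg - integral\<^sup>L M (Z0 g)\<bar> < t n" by simp
    have LL: "L \<le> L'" unfolding L'_def by simp
    have d1: "\<bar>ma - mg\<bar> \<le> L' * norm (a - g)"
    proof -
      have "ma - mg = (1 / real n) * (\<Sum>k=1..n. f a (Xs k \<omega>) (Ys k \<omega>) - f g (Xs k \<omega>) (Ys k \<omega>))"
        unfolding ma_def mg_def by (simp add: sum_subtractf algebra_simps)
      hence "\<bar>ma - mg\<bar> = (1 / real n) * \<bar>\<Sum>k=1..n. f a (Xs k \<omega>) (Ys k \<omega>) - f g (Xs k \<omega>) (Ys k \<omega>)\<bar>"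
        using np by (simp add: abs_mult)
      also have "\<dots> \<le> (1 / real n) * (\<Sum>k=1..n. L' * norm (a - g))"
      proof (intro mult_left_mono order.trans[OF sum_abs] sum_mono)
        fix k
        have "\<bar>f a (Xs k \<omega>) (Ys k \<omega>) - f g (Xs k \<omega>) (Ys k \<omega>)\<bar> \<le> L * norm (a - g)"
          using flip[OF a gS] Xsval Ysval \<omega> by blast
        also have "\<dots> \<le> L' * norm (a - g)" by (intro mult_right_mono LL) auto
        finally show "\<bar>f a (Xs k \<omega>) (Ys k \<omega>) - f g (Xs k \<omega>) (Ys k \<omega>)\<bar> \<le> L' * norm (a - g)" .
      qed (use np in auto)
      also have "\<dots> = L' * norm (a - g)" using np by simp
      finally show ?thesis .
    qed
    have d2: "\<bar>integral\<^sup>L M (Z0 a) - integral\<^sup>L M (Z0 g)\<bar> \<le> L' * norm (a - g)"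
    proof -
      have "integral\<^sup>L M (Z0 a) - integral\<^sup>L M (Z0 g) = (\<integral>\<omega>'. Z0 a \<omega>' - Z0 g \<omega>' \<partial>M)"
        using Bochner_Integration.integral_diff[OF Z0int[OF a] Z0int[OF gS]] by simp
      hence "\<bar>integral\<^sup>L M (Z0 a) - integral\<^sup>L M (Z0 g)\<bar> \<le> (\<integral>\<omega>'. \<bar>Z0 a \<omega>' - Z0 g \<omega>'\<bar> \<partial>M)"
        by simp
      also have "\<dots> \<le> (\<integral>\<omega>'. L' * norm (a - g) \<partial>M)"
      proof (rule integral_mono)
        show "integrable M (\<lambda>\<omega>'. \<bar>Z0 a \<omega>' - Z0 g \<omega>'\<bar>)"
          using Z0int a gS by auto
        show "integrable M (\<lambda>\<omega>'. L' * norm (a - g))" by simp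
        fix \<omega>' assume \<omega>': "\<omega>' \<in> space M"
        have "\<bar>f a (X \<omega>') (Y \<omega>') - f g (X \<omega>') (Y \<omega>')\<bar> \<le> L * norm (a - g)"
          using flip[OF a gS] Xval Yval \<omega>' by blast
        also have "\<dots> \<le> L' * norm (a - g)" by (intro mult_right_mono LL) auto
        finally show "\<bar>Z0 a \<omega>' - Z0 g \<omega>'\<bar> \<le> L' * norm (a - g)" using Z0eq[OF \<omega>'] by simp
      qed
      also have "\<dots> = L' * norm (a - g)" by (simp add: prob_space)
      finally show ?thesis .
    qed
    have "2 * (L' * norm (a - g)) \<le> 2 * (L' * (D * \<delta> n))"
      using g(2) L' by (intro mult_left_mono) auto
    also have "\<dots> = \<eta> * (\<epsilon>d * real n powr (- \<alpha>)) / 2"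
      unfolding \<delta>_def c0_def using L' D by (simp add: field_simps)
    finally have d3: "2 * (L' * norm (a - g)) \<le> \<eta> * (\<epsilon>d * real n powr (- \<alpha>)) / 2" .
    have "\<bar>ma - integral\<^sup>L M (Z0 a)\<bar> < \<eta> * (\<epsilon>d * real n powr (- \<alpha>))"
      using dg d1 d2 d3 unfolding t_def by linarith
    thus "\<bar>(1 / real n) * (\<Sum>k=1..n. f a (Xs k \<omega>) (Ys k \<omega>))
            - (\<integral>\<omega>'. f a (X \<omega>') (Y \<omega>') \<partial>M)\<bar> < \<eta> * (\<epsilon>d * real n powr (- \<alpha>))"
      unfolding ia ma_def .
  qed
  show ?thesis
  proof (rule AE_mp[OF BC], rule AE_I2, intro impI)
    fix \<omega> assume \<omega>: "\<omega> \<in> space M" and ev: "eventually (\<lambda>n. \<omega> \<in> space M - A n) sequentially"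
    show "eventually (\<lambda>n. \<forall>a\<in>S. \<bar>(1 / real n) * (\<Sum>k=1..n. f a (Xs k \<omega>) (Ys k \<omega>))
            - (\<integral>\<omega>'. f a (X \<omega>') (Y \<omega>') \<partial>M)\<bar> < \<eta> * (\<epsilon>d * real n powr (- \<alpha>))) sequentially"
      using eventually_conj[OF ev eventually_ge_at_top[of 1]]
      by (rule eventually_mono) (use good \<omega> in blast)
  qed
qed

lemma norm_vec_le_sum: "norm (x :: 'a::real_normed_vector^'n) \<le> (\<Sum>i\<in>UNIV. norm (x $ i))"
  unfolding norm_vec_def by (rule L2_set_le_sum) auto

lemma clBN_convex: "convex (clBN R :: (real^'d^'n) set)"
proof (rule convexI)
  fix a b :: "real^'d^'n" and u v :: real
  assume a: "a \<in> clBN R" and b: "b \<in> clBN R" and u: "0 \<le> u" and v: "0 \<le> v" and uv: "u + v = 1"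
  have "(u *\<^sub>R a + v *\<^sub>R b) $ i \<in> cball 0 R" for i
  proof -
    have "norm (u *\<^sub>R a $ i + v *\<^sub>R b $ i) \<le> u * norm (a $ i) + v * norm (b $ i)"
      using u v by (metis abs_of_nonneg norm_scaleR norm_triangle_le order_refl)
    also have "\<dots> \<le> u * R + v * R"
      using a b u v unfolding clBN_def by (intro add_mono mult_left_mono) auto
    also have "\<dots> = (u + v) * R" by (simp add: distrib_right)
    also have "\<dots> = R" using uv by simp
    finally show ?thesis by simp
  qed
  thus "u *\<^sub>R a + v *\<^sub>R b \<in> clBN R" unfolding clBN_def by blast
qed

lemma clBN_closed: "closed (clBN R :: (real^'d^'n) set)"
proof -
  have "clBN R = {a::real^'d^'n. \<forall>i. norm (a $ i) \<le> R}" unfolding clBN_def by auto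
  also have "closed \<dots>"
    by (intro closed_Collect_all closed_Collect_le continuous_intros)
  finally show ?thesis .
qed

lemma clBN_ne: "R \<ge> 0 \<Longrightarrow> clBN R \<noteq> {}"
proof -
  assume "R \<ge> 0"
  hence "0 \<in> clBN R" unfolding clBN_def by simp
  thus ?thesis by blast
qed

lemma clBN_sub: "clBN R \<subseteq> cball (0 :: real^'d^'n) (real CARD('n) * R)"
proof
  fix a :: "real^'d^'n" assume "a \<in> clBN R"
  hence "\<forall>i. norm (a $ i) \<le> R" unfolding clBN_def by auto
  hence "(\<Sum>i\<in>UNIV. norm (a $ i)) \<le> (\<Sum>i\<in>(UNIV::'n set). R)" by (intro sum_mono) auto
  hence "norm a \<le> (\<Sum>i\<in>(UNIV::'n set). R)" using norm_vec_le_sum[of a] by linarith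
  thus "a \<in> cball 0 (real CARD('n) * R)" by simp
qed

lemma zi_cont: "(\<forall>l. continuous_on XX (\<phi> l)) \<Longrightarrow> continuous_on XX (zi \<phi> ai)"
  unfolding zi_def[abs_def] by (intro continuous_intros) auto

lemma zhat_cont: "(\<forall>l. continuous_on XX (\<phi> l)) \<Longrightarrow> continuous_on XX (zhat \<phi> a)"
  unfolding zhat_def[abs_def] by (intro continuous_intros zi_cont)

lemma zi_bound:
  fixes ai bi :: "real^'d" and \<phi> :: "'d \<Rightarrow> 'x \<Rightarrow> real"
  assumes "\<forall>l. \<forall>x\<in>XX. \<bar>\<phi> l x\<bar> \<le> B\<phi>" "x \<in> XX"
  shows "\<bar>zi \<phi> ai x - zi \<phi> bi x\<bar> \<le> real CARD('d) * B\<phi> * norm (ai - bi)"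
proof -
  have "\<bar>zi \<phi> ai x - zi \<phi> bi x\<bar> = \<bar>\<Sum>l\<in>UNIV. (ai - bi) $ l * \<phi> l x\<bar>"
    unfolding zi_def by (simp add: sum_subtractf left_diff_distrib)
  also have "\<dots> \<le> (\<Sum>l\<in>UNIV. \<bar>(ai - bi) $ l * \<phi> l x\<bar>)" by (rule sum_abs)
  also have "\<dots> \<le> (\<Sum>l\<in>(UNIV::'d set). norm (ai - bi) * B\<phi>)"
  proof (rule sum_mono)
    fix l
    show "\<bar>(ai - bi) $ l * \<phi> l x\<bar> \<le> norm (ai - bi) * B\<phi>"
      unfolding abs_mult using assms component_le_norm_cart[of "ai - bi" l]
      by (intro mult_mono) auto
  qed
  also have "\<dots> = real CARD('d) * B\<phi> * norm (ai - bi)" by simp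
  finally show ?thesis .
qed

lemma zi_bound0:
  fixes ai :: "real^'d" and \<phi> :: "'d \<Rightarrow> 'x \<Rightarrow> real"
  assumes "\<forall>l. \<forall>x\<in>XX. \<bar>\<phi> l x\<bar> \<le> B\<phi>" "x \<in> XX"
  shows "\<bar>zi \<phi> ai x\<bar> \<le> real CARD('d) * B\<phi> * norm ai"
  using zi_bound[OF assms, of ai 0] by (simp add: zi_def)

lemma zhat_bound:
  fixes a b :: "real^'d^'n" and \<phi> :: "'d \<Rightarrow> 'x \<Rightarrow> real"
  assumes "\<forall>l. \<forall>x\<in>XX. \<bar>\<phi> l x\<bar> \<le> B\<phi>" "x \<in> XX"
  shows "norm (zhat \<phi> a x - zhat \<phi> b x) \<le> real CARD('n) * real CARD('d) * B\<phi> * norm (a - b)"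
proof -
  have B: "B\<phi> \<ge> 0" using assms by (meson abs_ge_zero order_trans)
  have "norm (zhat \<phi> a x - zhat \<phi> b x) \<le> (\<Sum>i\<in>UNIV. \<bar>(zhat \<phi> a x - zhat \<phi> b x) $ i\<bar>)"
    by (rule norm_le_l1_cart)
  also have "\<dots> \<le> (\<Sum>i\<in>(UNIV::'n set). real CARD('d) * B\<phi> * norm (a - b))"
  proof (rule sum_mono)
    fix i
    have "\<bar>(zhat \<phi> a x - zhat \<phi> b x) $ i\<bar> = \<bar>zi \<phi> (a $ i) x - zi \<phi> (b $ i) x\<bar>"
      unfolding zhat_def by simp
    also have "\<dots> \<le> real CARD('d) * B\<phi> * norm (a $ i - b $ i)" by (rule zi_bound[OF assms])
    also have "\<dots> \<le> real CARD('d) * B\<phi> * norm (a - b)"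
      using Finite_Cartesian_Product.norm_nth_le[of "a - b" i] B by (intro mult_left_mono) auto
    finally show "\<bar>(zhat \<phi> a x - zhat \<phi> b x) $ i\<bar> \<le> real CARD('d) * B\<phi> * norm (a - b)" .
  qed
  also have "\<dots> = real CARD('n) * real CARD('d) * B\<phi> * norm (a - b)" by simp
  finally show ?thesis .
qed

lemma zhat_in: "a \<in> clBN R \<Longrightarrow> x \<in> XX \<Longrightarrow> zhat \<phi> a x \<in> Zhat \<phi> XX R"
  unfolding zhat_def Zhat_def Zi_def clBN_def by auto

lemma zi_in: "ai \<in> cball 0 R \<Longrightarrow> x \<in> XX \<Longrightarrow> zi \<phi> ai x \<in> Zi \<phi> XX R"
  unfolding Zi_def by auto

lemma fstm: "fst \<in> borel_measurable (borel :: ('a::topological_space \<times> 'b::topological_space) measure)"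
  by (intro borel_measurable_continuous_onI continuous_intros)

lemma sndm: "snd \<in> borel_measurable (borel :: ('a::topological_space \<times> 'b::topological_space) measure)"
  by (intro borel_measurable_continuous_onI continuous_intros)

lemma restr_meas:
  fixes g :: "'x::euclidean_space \<Rightarrow> 'z::euclidean_space"
  assumes "compact XX" "continuous_on XX g"
  shows "(\<lambda>x. if x \<in> XX then g x else 0) \<in> borel_measurable borel"
  using assms by (intro borel_measurable_continuous_on_if borel_closed compact_imp_closed continuous_on_const)

lemma F_meas:
  fixes \<phi> :: "'d::finite \<Rightarrow> 'x::euclidean_space \<Rightarrow> real"
    and J :: "'n::finite \<Rightarrow> real^'n \<Rightarrow> 'y::euclidean_space \<Rightarrow> real"
    and XX :: "'x set" and YY :: "'y set"
  assumes XXc: "compact XX" and YYc: "compact YY" and phi_cont: "\<forall>l. continuous_on XX (\<phi> l)"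
    and dJ_meas: "\<forall>i. \<forall>z \<in> Zhat \<phi> XX R. (\<lambda>y. dJ J i z y) \<in> borel_measurable borel"
    and cont: "\<forall>y\<in>YY. continuous_on (Zhat \<phi> XX R) (\<lambda>z. Fz J z y)"
    and a: "a \<in> clBN R"
  shows "(\<lambda>p. if fst p \<in> XX \<and> snd p \<in> YY then Fb J \<phi> a (fst p) (snd p) $ i $ l else 0) \<in> borel_measurable borel"
proof -
  define K where "K = zhat \<phi> a ` XX"
  have zc: "continuous_on XX (zhat \<phi> a)" by (rule zhat_cont[OF phi_cont])
  have K: "compact K" unfolding K_def by (rule compact_continuous_image[OF zc XXc])
  have KZ: "K \<subseteq> Zhat \<phi> XX R" unfolding K_def by (rule image_subsetI) (rule zhat_in[OF a])
  define \<Phi> where "\<Phi> p = (if fst p \<in> K \<and> snd p \<in> YY then dJ J i (fst p) (snd p) else 0)" for p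
  have \<Phi>m: "\<Phi> \<in> borel_measurable borel"
    unfolding \<Phi>_def
  proof (rule carath_meas[OF K compact_imp_closed[OF YYc]])
    fix y assume y: "y \<in> YY"
    have "continuous_on K (\<lambda>z. Fz J z y $ i)"
      by (intro continuous_on_component continuous_on_subset[OF _ KZ]) (use cont y in auto)
    thus "continuous_on K (\<lambda>z. dJ J i z y)" by (simp add: Fz_def)
  next
    fix z assume "z \<in> K"
    hence "z \<in> Zhat \<phi> XX R" using KZ by auto
    thus "dJ J i z \<in> borel_measurable borel" using dJ_meas by auto
  qed
  define gz where "gz x = (if x \<in> XX then zhat \<phi> a x else 0)" for x
  have gzm: "gz \<in> borel_measurable borel" unfolding gz_def by (rule restr_meas[OF XXc zc])
  define ph where "ph x = (if x \<in> XX then \<phi> l x else 0)" for x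
  have phm: "ph \<in> borel_measurable borel" unfolding ph_def by (rule restr_meas[OF XXc]) (use phi_cont in auto)
  have Gm: "(\<lambda>p::'x \<times> 'y. (gz (fst p), snd p)) \<in> borel_measurable borel"
    by (intro borel_measurable_Pair measurable_compose[OF fstm gzm] sndm)
  have m: "(\<lambda>p::'x \<times> 'y. \<Phi> (gz (fst p), snd p) * ph (fst p)) \<in> borel_measurable borel"
    by (intro borel_measurable_times measurable_compose[OF Gm \<Phi>m] measurable_compose[OF fstm phm])
  have eq: "(\<lambda>p::'x \<times> 'y. \<Phi> (gz (fst p), snd p) * ph (fst p)) =
      (\<lambda>p. if fst p \<in> XX \<and> snd p \<in> YY then Fb J \<phi> a (fst p) (snd p) $ i $ l else 0)"
  proof
    fix p :: "'x \<times> 'y"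
    show "\<Phi> (gz (fst p), snd p) * ph (fst p) = (if fst p \<in> XX \<and> snd p \<in> YY then Fb J \<phi> a (fst p) (snd p) $ i $ l else 0)"
      by (cases "fst p \<in> XX") (auto simp: \<Phi>_def gz_def ph_def K_def Fb_def)
  qed
  show ?thesis using m unfolding eq .
qed

lemma h_meas':
  fixes \<phi> :: "'d::finite \<Rightarrow> 'x::euclidean_space \<Rightarrow> real"
    and h :: "'n::finite \<Rightarrow> real \<Rightarrow> 'y::euclidean_space \<Rightarrow> real"
    and XX :: "'x set" and YY :: "'y set" and a :: "real^'d^'n"
  assumes XXc: "compact XX" and YYc: "compact YY" and phi_cont: "\<forall>l. continuous_on XX (\<phi> l)"
    and h_meas: "\<forall>i. \<forall>t \<in> Zi \<phi> XX R. (\<lambda>y. h i t y) \<in> borel_measurable borel"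
    and cont: "\<forall>y\<in>YY. continuous_on (Zi \<phi> XX R) (\<lambda>t. h i t y)"
    and a: "a \<in> clBN R"
  shows "(\<lambda>p. if fst p \<in> XX \<and> snd p \<in> YY then h i (zi \<phi> (a $ i) (fst p)) (snd p) else 0) \<in> borel_measurable borel"
proof -
  define K where "K = zi \<phi> (a $ i) ` XX"
  have zc: "continuous_on XX (zi \<phi> (a $ i))" by (rule zi_cont[OF phi_cont])
  have K: "compact K" unfolding K_def by (rule compact_continuous_image[OF zc XXc])
  have KZ: "K \<subseteq> Zi \<phi> XX R" unfolding K_def by (rule image_subsetI, rule zi_in) (use a in \<open>auto simp: clBN_def\<close>)
  define \<Phi> where "\<Phi> p = (if fst p \<in> K \<and> snd p \<in> YY then h i (fst p) (snd p) else 0)" for p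
  have \<Phi>m: "\<Phi> \<in> borel_measurable borel"
    unfolding \<Phi>_def
  proof (rule carath_meas[OF K compact_imp_closed[OF YYc]])
    fix y assume y: "y \<in> YY"
    show "continuous_on K (\<lambda>z. h i z y)"
      by (rule continuous_on_subset[OF _ KZ]) (use cont y in auto)
  next
    fix z assume "z \<in> K"
    hence "z \<in> Zi \<phi> XX R" using KZ by auto
    thus "h i z \<in> borel_measurable borel" using h_meas by auto
  qed
  define gz where "gz x = (if x \<in> XX then zi \<phi> (a $ i) x else 0)" for x
  have gzm: "gz \<in> borel_measurable borel" unfolding gz_def by (rule restr_meas[OF XXc zc])
  define ph where "ph x = (if x \<in> XX then 1 else (0::real))" for x
  have phm: "ph \<in> borel_measurable borel" unfolding ph_def by (rule restr_meas[OF XXc]) (auto intro: continuous_on_const)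
  have Gm: "(\<lambda>p::'x \<times> 'y. (gz (fst p), snd p)) \<in> borel_measurable borel"
    by (intro borel_measurable_Pair measurable_compose[OF fstm gzm] sndm)
  have m: "(\<lambda>p::'x \<times> 'y. \<Phi> (gz (fst p), snd p) * ph (fst p)) \<in> borel_measurable borel"
    by (intro borel_measurable_times measurable_compose[OF Gm \<Phi>m] measurable_compose[OF fstm phm])
  have eq: "(\<lambda>p::'x \<times> 'y. \<Phi> (gz (fst p), snd p) * ph (fst p)) =
      (\<lambda>p. if fst p \<in> XX \<and> snd p \<in> YY then h i (zi \<phi> (a $ i) (fst p)) (snd p) else 0)"
  proof
    fix p :: "'x \<times> 'y"
    show "\<Phi> (gz (fst p), snd p) * ph (fst p) = (if fst p \<in> XX \<and> snd p \<in> YY then h i (zi \<phi> (a $ i) (fst p)) (snd p) else 0)"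
      by (cases "fst p \<in> XX") (auto simp: \<Phi>_def gz_def ph_def K_def)
  qed
  show ?thesis using m unfolding eq .
qed

theorem theorem1:
  fixes M :: "'w measure"
    and XX :: "'x::euclidean_space set" and YY :: "'y::euclidean_space set"
    and X :: "'w \<Rightarrow> 'x" and Y :: "'w \<Rightarrow> 'y"
    and Xs :: "nat \<Rightarrow> 'w \<Rightarrow> 'x" and Ys :: "nat \<Rightarrow> 'w \<Rightarrow> 'y"
    and \<phi> :: "'d::finite \<Rightarrow> 'x \<Rightarrow> real"
    and J :: "'n::finite \<Rightarrow> real^'n \<Rightarrow> 'y \<Rightarrow> real"
    and h :: "'n \<Rightarrow> real \<Rightarrow> 'y \<Rightarrow> real"
    and R lam \<epsilon>h \<epsilon>d \<alpha> :: real
  assumes P: "prob_space M"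
    and R: "R > 0" and lam: "lam > 0"
    and XXc: "compact XX" and YYc: "compact YY"
    and Xrv: "X \<in> borel_measurable M" and Xval: "\<forall>\<omega>\<in>space M. X \<omega> \<in> XX"
    and Yrv: "Y \<in> borel_measurable M" and Yval: "\<forall>\<omega>\<in>space M. Y \<omega> \<in> YY"
    and phi_cont: "\<forall>l. continuous_on XX (\<phi> l)"
    \<comment> \<open>(X^k,Y^k), k \<ge> 1, are i.i.d. copies of (X,Y)\<close>
    and Xsrv: "\<forall>k. Xs k \<in> borel_measurable M" and Xsval: "\<forall>k. \<forall>\<omega>\<in>space M. Xs k \<omega> \<in> XX"
    and Ysrv: "\<forall>k. Ys k \<in> borel_measurable M" and Ysval: "\<forall>k. \<forall>\<omega>\<in>space M. Ys k \<omega> \<in> YY"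
    and indep: "prob_space.indep_vars M (\<lambda>_. borel) (\<lambda>k \<omega>. (Xs k \<omega>, Ys k \<omega>)) {1..}"
    and ident: "\<forall>k\<ge>1. distr M borel (\<lambda>\<omega>. (Xs k \<omega>, Ys k \<omega>)) = distr M borel (\<lambda>\<omega>. (X \<omega>, Y \<omega>))"
    \<comment> \<open>implicit measurability of the data in y\<close>
    and dJ_meas: "\<forall>i. \<forall>z \<in> Zhat \<phi> XX R. (\<lambda>y. dJ J i z y) \<in> borel_measurable borel"
    and h_meas: "\<forall>i. \<forall>t \<in> Zi \<phi> XX R. (\<lambda>y. h i t y) \<in> borel_measurable borel"
    \<comment> \<open>(A1)\<close>
    and A1: "\<forall>i z y. (\<lambda>t. J i (vupd z i t) y) C1_differentiable_on UNIV"
    \<comment> \<open>(A2)\<close>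
    and A2: "\<exists>LF Lh.
        (\<forall>y\<in>YY. LF-lipschitz_on (Zhat \<phi> XX R) (\<lambda>z. Fz J z y))
      \<and> (\<forall>i. \<forall>y\<in>YY. Lh-lipschitz_on (Zi \<phi> XX R) (\<lambda>t. h i t y))
      \<and> (\<exists>z \<in> Zhat \<phi> XX R. bounded ((\<lambda>y. Fz J z y) ` YY)
            \<and> (\<forall>i. bounded ((\<lambda>y. h i (z $ i) y) ` YY)))"
    \<comment> \<open>(A4)\<close>
    and eh: "\<epsilon>h > 0"
    and A4: "\<forall>i. {ai \<in> cball 0 R. hbar M h \<phi> X Y i ai \<le> - \<epsilon>h} \<noteq> {}"
    \<comment> \<open>the constant epsilon_diamond\<close>
    and ed: "0 < \<epsilon>d" "\<epsilon>d < \<epsilon>h"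
    and rateF: "\<forall>a \<in> clBN R. \<forall>i l.
        rate_lb M (\<lambda>\<omega>. Fb J \<phi> a (X \<omega>) (Y \<omega>) $ i $ l - FF0 M J \<phi> X Y a $ i $ l) \<epsilon>d"
    and rateh: "\<forall>a \<in> clBN R. \<forall>i.
        rate_lb M (\<lambda>\<omega>. h i (zi \<phi> (a $ i) (X \<omega>)) (Y \<omega>) - hbar M h \<phi> X Y i (a $ i)) \<epsilon>d"
    and alpha: "0 < \<alpha>" "\<alpha> < 1/2"
  shows "(AE \<omega> in M. \<not> (\<exists>\<^sub>F n in sequentially.
            \<omega> \<notin> event_E M J h \<phi> X Y Xs Ys lam R (\<epsilon>d * real n powr (- \<alpha>)) n))
    \<and> (\<exists>\<Omega>t \<in> sets M. measure M \<Omega>t = 1 \<and>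
         (\<forall>\<omega>\<in>\<Omega>t. \<exists>n\<omega>::nat. n\<omega> \<ge> 1 \<and>
            (\<forall>n>n\<omega>. \<omega> \<in> event_E M J h \<phi> X Y Xs Ys lam R (\<epsilon>d * real n powr (- \<alpha>)) n)))"
proof -
  interpret prob_space M by (rule P)
  have R0: "R \<ge> 0" using R by simp
  obtain \<omega>0 where \<omega>0: "\<omega>0 \<in> space M" using not_empty by blast
  have YYne: "Y \<omega>0 \<in> YY" using Yval \<omega>0 by blast
  obtain LF Lh z0 where LFl: "\<forall>y\<in>YY. LF-lipschitz_on (Zhat \<phi> XX R) (\<lambda>z. Fz J z y)"
    and Lhl: "\<forall>i. \<forall>y\<in>YY. Lh-lipschitz_on (Zi \<phi> XX R) (\<lambda>t. h i t y)"
    and z0: "z0 \<in> Zhat \<phi> XX R" and bF0: "bounded ((\<lambda>y. Fz J z0 y) ` YY)"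
    and bh0: "\<forall>i. bounded ((\<lambda>y. h i (z0 $ i) y) ` YY)"
    using A2 by blast
  have LF0: "LF \<ge> 0" using LFl YYne by (auto simp: lipschitz_on_def)
  have Lh0: "Lh \<ge> 0" using Lhl YYne by (auto simp: lipschitz_on_def)
  have "\<forall>l. \<exists>b. \<forall>x\<in>XX. \<bar>\<phi> l x\<bar> \<le> b"
  proof
    fix l
    have "bounded (\<phi> l ` XX)"
      using phi_cont XXc by (intro compact_imp_bounded compact_continuous_image) auto
    thus "\<exists>b. \<forall>x\<in>XX. \<bar>\<phi> l x\<bar> \<le> b" unfolding bounded_iff by auto
  qed
  then obtain b\<phi> where b\<phi>: "\<And>l x. x \<in> XX \<Longrightarrow> \<bar>\<phi> l x\<bar> \<le> b\<phi> l" by metis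
  define B\<phi> where "B\<phi> = (\<Sum>l\<in>UNIV. \<bar>b\<phi> l\<bar>)"
  have hB\<phi>: "\<forall>l. \<forall>x\<in>XX. \<bar>\<phi> l x\<bar> \<le> B\<phi>"
  proof (intro allI ballI)
    fix l x assume "x \<in> XX"
    hence "\<bar>\<phi> l x\<bar> \<le> b\<phi> l" by (rule b\<phi>)
    hence "\<bar>\<phi> l x\<bar> \<le> \<bar>b\<phi> l\<bar>" by linarith
    also have "\<dots> \<le> B\<phi>" unfolding B\<phi>_def by (rule member_le_sum) auto
    finally show "\<bar>\<phi> l x\<bar> \<le> B\<phi>" .
  qed
  have B\<phi>0: "B\<phi> \<ge> 0" unfolding B\<phi>_def by (simp add: sum_nonneg)
  define Cz where "Cz = real CARD('n) * real CARD('d) * B\<phi>"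
  have Cz0: "Cz \<ge> 0" unfolding Cz_def using B\<phi>0 by simp
  have zlip: "norm (zhat \<phi> a x - zhat \<phi> b x) \<le> Cz * norm (a - b)" if "x \<in> XX" for a b :: "real^'d^'n" and x
    unfolding Cz_def by (rule zhat_bound[OF hB\<phi> that])
  have zbd: "norm (zhat \<phi> a x) \<le> Cz * (real CARD('n) * R)" if "a \<in> clBN R" "x \<in> XX" for a :: "real^'d^'n" and x
  proof -
    have "zhat \<phi> 0 x = 0" by (simp add: zhat_def zi_def vec_eq_iff)
    hence "norm (zhat \<phi> a x) \<le> Cz * norm (a - 0)" using zlip[OF that(2), of a 0] by (metis diff_zero)
    also have "\<dots> \<le> Cz * (real CARD('n) * R)"
      using clBN_sub[of R] that(1) Cz0 by (intro mult_left_mono) auto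
    finally show ?thesis .
  qed
  obtain B0 where B0: "\<forall>y\<in>YY. norm (Fz J z0 y) \<le> B0" using bF0 unfolding bounded_iff by auto
  define BF where "BF = (B0 + LF * (Cz * (real CARD('n) * R) + norm z0)) * B\<phi>"
  have Fzb: "norm (Fz J (zhat \<phi> a x) y) \<le> B0 + LF * (Cz * (real CARD('n) * R) + norm z0)"
    if "a \<in> clBN R" "x \<in> XX" "y \<in> YY" for a :: "real^'d^'n" and x y
  proof -
    have zin: "zhat \<phi> a x \<in> Zhat \<phi> XX R" by (rule zhat_in[OF that(1,2)])
    have "norm (Fz J (zhat \<phi> a x) y) \<le> norm (Fz J z0 y) + dist (Fz J (zhat \<phi> a x) y) (Fz J z0 y)"
      by (simp add: dist_norm norm_triangle_sub)
    also have "\<dots> \<le> B0 + LF * dist (zhat \<phi> a x) z0"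
      using B0 that(3) lipschitz_onD[OF LFl[rule_format, OF that(3)] zin z0] by (intro add_mono) auto
    also have "\<dots> \<le> B0 + LF * (Cz * (real CARD('n) * R) + norm z0)"
    proof -
      have "dist (zhat \<phi> a x) z0 \<le> norm (zhat \<phi> a x) + norm z0" by (simp add: dist_norm norm_triangle_ineq4)
      also have "\<dots> \<le> Cz * (real CARD('n) * R) + norm z0" using zbd[OF that(1,2)] by simp
      finally show ?thesis using LF0 by (intro add_left_mono mult_left_mono) auto
    qed
    finally show ?thesis .
  qed
  have fbdF: "\<bar>Fb J \<phi> a x y $ i $ l\<bar> \<le> BF" if "a \<in> clBN R" "x \<in> XX" "y \<in> YY" for a :: "real^'d^'n" and x y i l
  proof -
    have "\<bar>Fb J \<phi> a x y $ i $ l\<bar> = \<bar>Fz J (zhat \<phi> a x) y $ i\<bar> * \<bar>\<phi> l x\<bar>"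
      by (simp add: Fb_def Fz_def abs_mult)
    also have "\<dots> \<le> (B0 + LF * (Cz * (real CARD('n) * R) + norm z0)) * B\<phi>"
      using component_le_norm_cart[of "Fz J (zhat \<phi> a x) y" i] Fzb[OF that] hB\<phi> that(2)
      by (intro mult_mono) auto
    finally show ?thesis unfolding BF_def .
  qed
  have flipF: "\<bar>Fb J \<phi> a x y $ i $ l - Fb J \<phi> b x y $ i $ l\<bar> \<le> (LF * Cz * B\<phi>) * norm (a - b)"
    if "a \<in> clBN R" "b \<in> clBN R" "x \<in> XX" "y \<in> YY" for a b :: "real^'d^'n" and x y i l
  proof -
    have za: "zhat \<phi> a x \<in> Zhat \<phi> XX R" by (rule zhat_in[OF that(1,3)])
    have zb: "zhat \<phi> b x \<in> Zhat \<phi> XX R" by (rule zhat_in[OF that(2,3)])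
    have "\<bar>Fb J \<phi> a x y $ i $ l - Fb J \<phi> b x y $ i $ l\<bar> = \<bar>(Fz J (zhat \<phi> a x) y - Fz J (zhat \<phi> b x) y) $ i\<bar> * \<bar>\<phi> l x\<bar>"
      by (simp add: Fb_def Fz_def abs_mult left_diff_distrib[symmetric])
    also have "\<dots> \<le> (LF * (Cz * norm (a - b))) * B\<phi>"
    proof (intro mult_mono)
      have "\<bar>(Fz J (zhat \<phi> a x) y - Fz J (zhat \<phi> b x) y) $ i\<bar> \<le> dist (Fz J (zhat \<phi> a x) y) (Fz J (zhat \<phi> b x) y)"
        unfolding dist_norm by (rule component_le_norm_cart)
      also have "\<dots> \<le> LF * dist (zhat \<phi> a x) (zhat \<phi> b x)"
        by (rule lipschitz_onD[OF LFl[rule_format, OF that(4)] za zb])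
      also have "\<dots> \<le> LF * (Cz * norm (a - b))"
        using zlip[OF that(3), of a b] LF0 by (intro mult_left_mono) (auto simp: dist_norm)
      finally show "\<bar>(Fz J (zhat \<phi> a x) y - Fz J (zhat \<phi> b x) y) $ i\<bar> \<le> LF * (Cz * norm (a - b))" .
      show "\<bar>\<phi> l x\<bar> \<le> B\<phi>" using hB\<phi> that(3) by auto
    qed (use LF0 Cz0 in auto)
    finally show ?thesis by (simp add: ac_simps)
  qed

  have "\<forall>i. \<exists>b. \<forall>y\<in>YY. \<bar>h i (z0 $ i) y\<bar> \<le> b" using bh0 unfolding bounded_iff by auto
  then obtain B0h where B0h: "\<And>i y. y \<in> YY \<Longrightarrow> \<bar>h i (z0 $ i) y\<bar> \<le> B0h i" by metis
  define Bh where "Bh i = B0h i + Lh * (real CARD('d) * B\<phi> * R + \<bar>z0 $ i\<bar>)" for i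
  have z0i: "z0 $ i \<in> Zi \<phi> XX R" for i using z0 unfolding Zhat_def by auto
  have fbdH: "\<bar>h i (zi \<phi> (a $ i) x) y\<bar> \<le> Bh i" if "a \<in> clBN R" "x \<in> XX" "y \<in> YY" for a :: "real^'d^'n" and x y i
  proof -
    have ai: "a $ i \<in> cball 0 R" using that(1) unfolding clBN_def by auto
    have tin: "zi \<phi> (a $ i) x \<in> Zi \<phi> XX R" by (rule zi_in[OF ai that(2)])
    have "\<bar>h i (zi \<phi> (a $ i) x) y\<bar> \<le> \<bar>h i (z0 $ i) y\<bar> + dist (h i (zi \<phi> (a $ i) x) y) (h i (z0 $ i) y)"
      by (simp add: dist_real_def)
    also have "\<dots> \<le> B0h i + Lh * dist (zi \<phi> (a $ i) x) (z0 $ i)"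
      using B0h[OF that(3)] lipschitz_onD[OF Lhl[rule_format, OF that(3)] tin z0i] by (intro add_mono) auto
    also have "\<dots> \<le> Bh i"
    proof -
      have "\<bar>zi \<phi> (a $ i) x\<bar> \<le> real CARD('d) * B\<phi> * norm (a $ i)" by (rule zi_bound0[OF hB\<phi> that(2)])
      also have "\<dots> \<le> real CARD('d) * B\<phi> * R" using ai B\<phi>0 by (intro mult_left_mono) auto
      finally have "dist (zi \<phi> (a $ i) x) (z0 $ i) \<le> real CARD('d) * B\<phi> * R + \<bar>z0 $ i\<bar>"
        by (simp add: dist_real_def)
      thus ?thesis unfolding Bh_def using Lh0 by (intro add_left_mono mult_left_mono) auto
    qed
    finally show ?thesis .
  qed
  have flipH: "\<bar>h i (zi \<phi> (a $ i) x) y - h i (zi \<phi> (b $ i) x) y\<bar> \<le> (Lh * (real CARD('d) * B\<phi>)) * norm (a - b)"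
    if "a \<in> clBN R" "b \<in> clBN R" "x \<in> XX" "y \<in> YY" for a b :: "real^'d^'n" and x y i
  proof -
    have ai: "a $ i \<in> cball 0 R" using that(1) unfolding clBN_def by auto
    have bi: "b $ i \<in> cball 0 R" using that(2) unfolding clBN_def by auto
    have "\<bar>h i (zi \<phi> (a $ i) x) y - h i (zi \<phi> (b $ i) x) y\<bar> \<le> Lh * dist (zi \<phi> (a $ i) x) (zi \<phi> (b $ i) x)"
      using lipschitz_onD[OF Lhl[rule_format, OF that(4)] zi_in[OF ai that(3)] zi_in[OF bi that(3)]]
      by (simp add: dist_real_def)
    also have "\<dots> \<le> Lh * (real CARD('d) * B\<phi> * norm (a $ i - b $ i))"
      using zi_bound[OF hB\<phi> that(3), of "a $ i" "b $ i"] Lh0 by (intro mult_left_mono) (auto simp: dist_real_def)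
    also have "\<dots> \<le> Lh * (real CARD('d) * B\<phi> * norm (a - b))"
      using Finite_Cartesian_Product.norm_nth_le[of "a - b" i] Lh0 B\<phi>0
      by (intro mult_left_mono) auto
    finally show ?thesis by (simp add: ac_simps)
  qed
  have contF: "\<forall>y\<in>YY. continuous_on (Zhat \<phi> XX R) (\<lambda>z. Fz J z y)"
    using LFl lipschitz_on_continuous_on by blast
  have contH: "\<forall>y\<in>YY. continuous_on (Zi \<phi> XX R) (\<lambda>t. h i t y)" for i
    using Lhl lipschitz_on_continuous_on by blast
  have pair0: "(\<lambda>\<omega>. (X \<omega>, Y \<omega>)) \<in> borel_measurable M"
    using Xrv Yrv by (intro borel_measurable_Pair) auto
  have FF0c: "FF0 M J \<phi> X Y a $ i $ l = (\<integral>\<omega>. Fb J \<phi> a (X \<omega>) (Y \<omega>) $ i $ l \<partial>M)"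
    if a: "a \<in> clBN R" for a :: "real^'d^'n" and i l
  proof -
    have cm: "(\<lambda>\<omega>. Fb J \<phi> a (X \<omega>) (Y \<omega>) $ i $ l) \<in> borel_measurable M" for i l
    proof -
      have m1: "(\<lambda>\<omega>. if X \<omega> \<in> XX \<and> Y \<omega> \<in> YY then Fb J \<phi> a (X \<omega>) (Y \<omega>) $ i $ l else 0)
          \<in> borel_measurable M"
        using measurable_compose[OF pair0 F_meas[OF XXc YYc phi_cont dJ_meas contF a, of i l]] by (simp only: fst_conv snd_conv)
      show ?thesis
      proof (rule measurable_cong[THEN iffD1, OF _ m1])
        fix \<omega> assume "\<omega> \<in> space M"
        thus "(if X \<omega> \<in> XX \<and> Y \<omega> \<in> YY then Fb J \<phi> a (X \<omega>) (Y \<omega>) $ i $ l else 0) = Fb J \<phi> a (X \<omega>) (Y \<omega>) $ i $ l"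
          using Xval Yval by simp
      qed
    qed
    have vm: "(\<lambda>\<omega>. Fb J \<phi> a (X \<omega>) (Y \<omega>)) \<in> borel_measurable M"
    proof (rule borel_measurable_euclidean_space[THEN iffD2], intro ballI)
      fix b :: "real^'d^'n" assume "b \<in> Basis"
      hence "b \<in> (\<Union>i. \<Union>u\<in>Basis. {axis i u})" by (simp only: Basis_vec_def)
      then obtain i and u :: "real^'d" where u: "u \<in> Basis" and b: "b = axis i u" by blast
      from u have "u \<in> (\<Union>l. \<Union>v\<in>(Basis::real set). {axis l v})" by (simp only: Basis_vec_def)
      then obtain l and v :: real where v: "v \<in> Basis" and uv: "u = axis l v" by blast
      from v have "v = 1" by simp
      with uv have "u = axis l (1::real)" by simp
      hence "(\<lambda>\<omega>. Fb J \<phi> a (X \<omega>) (Y \<omega>) \<bullet> b) = (\<lambda>\<omega>. Fb J \<phi> a (X \<omega>) (Y \<omega>) $ i $ l)"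
        unfolding b by (simp add: inner_axis)
      thus "(\<lambda>\<omega>. Fb J \<phi> a (X \<omega>) (Y \<omega>) \<bullet> b) \<in> borel_measurable M" using cm by simp
    qed
    have int: "integrable M (\<lambda>\<omega>. Fb J \<phi> a (X \<omega>) (Y \<omega>))"
    proof (rule integrable_const_bound[where B="real CARD('n) * (real CARD('d) * BF)"])
      show "AE \<omega> in M. norm (Fb J \<phi> a (X \<omega>) (Y \<omega>)) \<le> real CARD('n) * (real CARD('d) * BF)"
      proof (rule AE_I2)
        fix \<omega> assume \<omega>: "\<omega> \<in> space M"
        have "norm (Fb J \<phi> a (X \<omega>) (Y \<omega>)) \<le> (\<Sum>i\<in>UNIV. norm (Fb J \<phi> a (X \<omega>) (Y \<omega>) $ i))"
          by (rule norm_vec_le_sum)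
        also have "\<dots> \<le> (\<Sum>i\<in>(UNIV::'n set). real CARD('d) * BF)"
        proof (rule sum_mono)
          fix i
          have "norm (Fb J \<phi> a (X \<omega>) (Y \<omega>) $ i) \<le> (\<Sum>l\<in>UNIV. \<bar>Fb J \<phi> a (X \<omega>) (Y \<omega>) $ i $ l\<bar>)"
            by (rule norm_le_l1_cart)
          also have "\<dots> \<le> (\<Sum>l\<in>(UNIV::'d set). BF)"
            using fbdF[OF a] Xval Yval \<omega> by (intro sum_mono) auto
          finally show "norm (Fb J \<phi> a (X \<omega>) (Y \<omega>) $ i) \<le> real CARD('d) * BF" by simp
        qed
        also have "\<dots> = real CARD('n) * (real CARD('d) * BF)" by simp
        finally show "norm (Fb J \<phi> a (X \<omega>) (Y \<omega>)) \<le> real CARD('n) * (real CARD('d) * BF)" .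
      qed
    qed (rule vm)
    have bl: "bounded_linear (\<lambda>v::real^'d^'n. v $ i $ l)"
      using bounded_linear_compose[OF bounded_linear_vec_nth[of l] bounded_linear_vec_nth[of i]] by (simp add: o_def)
    show ?thesis
      unfolding FF0_def using integral_bounded_linear[OF bl int] by simp
  qed

  define \<eta>F where "\<eta>F = 1 / (real CARD('n) * real CARD('d))"
  have \<eta>F: "\<eta>F > 0" unfolding \<eta>F_def by simp
  define \<epsilon> where "\<epsilon> n = \<epsilon>d * real n powr (- \<alpha>)" for n :: nat
  have devF: "AE \<omega> in M. eventually (\<lambda>n. \<forall>a\<in>clBN R. \<bar>(1 / real n) * (\<Sum>k=1..n. Fb J \<phi> a (Xs k \<omega>) (Ys k \<omega>) $ i $ l)
            - (\<integral>\<omega>'. Fb J \<phi> a (X \<omega>') (Y \<omega>') $ i $ l \<partial>M)\<bar> < \<eta>F * (\<epsilon>d * real n powr (- \<alpha>))) sequentially" for i l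
  proof (rule uniform_slln[where f = "\<lambda>a x y. Fb J \<phi> a x y $ i $ l" and B = BF and L = "LF * Cz * B\<phi>",
        OF P clBN_convex clBN_closed clBN_ne[OF R0] clBN_sub Xrv Xval Yrv Yval Xsrv Xsval Ysrv Ysval indep ident])
    show "\<And>a. a \<in> clBN R \<Longrightarrow> (\<lambda>p. if fst p \<in> XX \<and> snd p \<in> YY then Fb J \<phi> a (fst p) (snd p) $ i $ l else 0) \<in> borel_measurable borel"
      by (rule F_meas[OF XXc YYc phi_cont dJ_meas contF])
  qed (use fbdF flipF \<eta>F ed alpha in auto)
  have devH: "AE \<omega> in M. eventually (\<lambda>n. \<forall>a\<in>clBN R. \<bar>(1 / real n) * (\<Sum>k=1..n. h i (zi \<phi> (a $ i) (Xs k \<omega>)) (Ys k \<omega>))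
            - (\<integral>\<omega>'. h i (zi \<phi> (a $ i) (X \<omega>')) (Y \<omega>') \<partial>M)\<bar> < 1 * (\<epsilon>d * real n powr (- \<alpha>))) sequentially" for i
  proof (rule uniform_slln[where f = "\<lambda>a x y. h i (zi \<phi> (a $ i) x) y" and B = "Bh i" and L = "Lh * (real CARD('d) * B\<phi>)",
        OF P clBN_convex clBN_closed clBN_ne[OF R0] clBN_sub Xrv Xval Yrv Yval Xsrv Xsval Ysrv Ysval indep ident])
    show "\<And>a. a \<in> clBN R \<Longrightarrow> (\<lambda>p. if fst p \<in> XX \<and> snd p \<in> YY then h i (zi \<phi> (a $ i) (fst p)) (snd p) else 0) \<in> borel_measurable borel"
      by (rule h_meas'[OF XXc YYc phi_cont h_meas contH])
  qed (use fbdH flipH ed alpha in auto)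
  have key: "\<omega> \<in> event_E M J h \<phi> X Y Xs Ys lam R (\<epsilon> n) n"
    if \<omega>: "\<omega> \<in> space M" and n: "n \<ge> 1"
      and HF: "\<forall>i l. \<forall>a\<in>clBN R. \<bar>(1 / real n) * (\<Sum>k=1..n. Fb J \<phi> a (Xs k \<omega>) (Ys k \<omega>) $ i $ l)
            - (\<integral>\<omega>'. Fb J \<phi> a (X \<omega>') (Y \<omega>') $ i $ l \<partial>M)\<bar> < \<eta>F * \<epsilon> n"
      and HH: "\<forall>i. \<forall>a\<in>clBN R. \<bar>(1 / real n) * (\<Sum>k=1..n. h i (zi \<phi> (a $ i) (Xs k \<omega>)) (Ys k \<omega>))
            - (\<integral>\<omega>'. h i (zi \<phi> (a $ i) (X \<omega>')) (Y \<omega>') \<partial>M)\<bar> < \<epsilon> n"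
    for \<omega> n
  proof -
    have HH': "\<bar>hemp h \<phi> Xs Ys i \<omega> n (a $ i) - hbar M h \<phi> X Y i (a $ i)\<bar> < \<epsilon> n" if "a \<in> clBN R" for a i
      using HH that unfolding hemp_def hbar_def by blast
    have c1: "norm (Femp J \<phi> Xs Ys lam \<omega> n a - FF M J \<phi> X Y lam a) < \<epsilon> n" if a: "a \<in> clBN R" for a
    proof -
      define v where "v = Femp J \<phi> Xs Ys lam \<omega> n a - FF M J \<phi> X Y lam a"
      have vc: "v $ i $ l = (1 / real n) * (\<Sum>k=1..n. Fb J \<phi> a (Xs k \<omega>) (Ys k \<omega>) $ i $ l)
            - (\<integral>\<omega>'. Fb J \<phi> a (X \<omega>') (Y \<omega>') $ i $ l \<partial>M)" for i l
        unfolding v_def Femp_def FF_def using FF0c[OF a, of i l] by simp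
      have "norm v \<le> (\<Sum>i\<in>UNIV. norm (v $ i))" by (rule norm_vec_le_sum)
      also have "\<dots> \<le> (\<Sum>i\<in>UNIV. \<Sum>l\<in>UNIV. \<bar>v $ i $ l\<bar>)" by (intro sum_mono norm_le_l1_cart)
      also have "\<dots> < (\<Sum>i\<in>(UNIV::'n set). \<Sum>l\<in>(UNIV::'d set). \<eta>F * \<epsilon> n)"
        by (intro sum_strict_mono) (use HF a vc in auto)
      also have "\<dots> = \<epsilon> n" unfolding \<eta>F_def by simp
      finally show ?thesis unfolding v_def .
    qed
    have c2: "AAeps M h \<phi> X Y R (- \<epsilon> n) \<subseteq> Aemp h \<phi> Xs Ys R \<omega> n"
    proof
      fix a assume "a \<in> AAeps M h \<phi> X Y R (- \<epsilon> n)"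
      hence A: "\<forall>i. a $ i \<in> cball 0 R \<and> hbar M h \<phi> X Y i (a $ i) \<le> - \<epsilon> n" unfolding AAeps_def by auto
      hence a: "a \<in> clBN R" unfolding clBN_def by auto
      have "hemp h \<phi> Xs Ys i \<omega> n (a $ i) \<le> 0" for i using HH'[OF a, of i] A[rule_format, of i] by (auto simp: abs_less_iff)
      thus "a \<in> Aemp h \<phi> Xs Ys R \<omega> n" unfolding Aemp_def using A by auto
    qed
    have c3: "Aemp h \<phi> Xs Ys R \<omega> n \<subseteq> AAeps M h \<phi> X Y R (\<epsilon> n)"
    proof
      fix a assume "a \<in> Aemp h \<phi> Xs Ys R \<omega> n"
      hence A: "\<forall>i. a $ i \<in> cball 0 R \<and> hemp h \<phi> Xs Ys i \<omega> n (a $ i) \<le> 0" unfolding Aemp_def by auto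
      hence a: "a \<in> clBN R" unfolding clBN_def by auto
      have "hbar M h \<phi> X Y i (a $ i) \<le> \<epsilon> n" for i using HH'[OF a, of i] A[rule_format, of i] by (auto simp: abs_less_iff)
      thus "a \<in> AAeps M h \<phi> X Y R (\<epsilon> n)" unfolding AAeps_def using A by auto
    qed
    show ?thesis unfolding event_E_def using \<omega> c1 c2 c3 by auto
  qed
  have AEF: "AE \<omega> in M. \<forall>p\<in>(UNIV :: ('n \<times> 'd) set). eventually (\<lambda>n. \<forall>a\<in>clBN R. \<bar>(1 / real n) * (\<Sum>k=1..n. Fb J \<phi> a (Xs k \<omega>) (Ys k \<omega>) $ fst p $ snd p)
            - (\<integral>\<omega>'. Fb J \<phi> a (X \<omega>') (Y \<omega>') $ fst p $ snd p \<partial>M)\<bar> < \<eta>F * (\<epsilon>d * real n powr (- \<alpha>))) sequentially"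
    by (rule AE_finite_allI) (use devF in auto)
  have AEH: "AE \<omega> in M. \<forall>i\<in>(UNIV :: 'n set). eventually (\<lambda>n. \<forall>a\<in>clBN R. \<bar>(1 / real n) * (\<Sum>k=1..n. h i (zi \<phi> (a $ i) (Xs k \<omega>)) (Ys k \<omega>))
            - (\<integral>\<omega>'. h i (zi \<phi> (a $ i) (X \<omega>')) (Y \<omega>') \<partial>M)\<bar> < 1 * (\<epsilon>d * real n powr (- \<alpha>))) sequentially"
    by (rule AE_finite_allI) (use devH in auto)
  have main: "AE \<omega> in M. eventually (\<lambda>n. \<omega> \<in> event_E M J h \<phi> X Y Xs Ys lam R (\<epsilon>d * real n powr (- \<alpha>)) n) sequentially"
  proof (rule AE_mp[OF AEF], rule AE_mp[OF AEH], rule AE_I2, intro impI)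
    fix \<omega> assume \<omega>: "\<omega> \<in> space M"
    assume eH: "\<forall>i\<in>(UNIV :: 'n set). eventually (\<lambda>n. \<forall>a\<in>clBN R. \<bar>(1 / real n) * (\<Sum>k=1..n. h i (zi \<phi> (a $ i) (Xs k \<omega>)) (Ys k \<omega>))
            - (\<integral>\<omega>'. h i (zi \<phi> (a $ i) (X \<omega>')) (Y \<omega>') \<partial>M)\<bar> < 1 * (\<epsilon>d * real n powr (- \<alpha>))) sequentially"
    assume eF: "\<forall>p\<in>(UNIV :: ('n \<times> 'd) set). eventually (\<lambda>n. \<forall>a\<in>clBN R. \<bar>(1 / real n) * (\<Sum>k=1..n. Fb J \<phi> a (Xs k \<omega>) (Ys k \<omega>) $ fst p $ snd p)
            - (\<integral>\<omega>'. Fb J \<phi> a (X \<omega>') (Y \<omega>') $ fst p $ snd p \<partial>M)\<bar> < \<eta>F * (\<epsilon>d * real n powr (- \<alpha>))) sequentially"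
    have eH': "eventually (\<lambda>n. \<forall>i. \<forall>a\<in>clBN R. \<bar>(1 / real n) * (\<Sum>k=1..n. h i (zi \<phi> (a $ i) (Xs k \<omega>)) (Ys k \<omega>))
            - (\<integral>\<omega>'. h i (zi \<phi> (a $ i) (X \<omega>')) (Y \<omega>') \<partial>M)\<bar> < \<epsilon> n) sequentially"
      unfolding \<epsilon>_def by (rule eventually_all_finite) (use eH in auto)
    have eF': "eventually (\<lambda>n. \<forall>p::'n \<times> 'd. \<forall>a\<in>clBN R. \<bar>(1 / real n) * (\<Sum>k=1..n. Fb J \<phi> a (Xs k \<omega>) (Ys k \<omega>) $ fst p $ snd p)
            - (\<integral>\<omega>'. Fb J \<phi> a (X \<omega>') (Y \<omega>') $ fst p $ snd p \<partial>M)\<bar> < \<eta>F * \<epsilon> n) sequentially"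
      unfolding \<epsilon>_def by (rule eventually_all_finite) (use eF in auto)
    have "eventually (\<lambda>n. \<omega> \<in> event_E M J h \<phi> X Y Xs Ys lam R (\<epsilon> n) n) sequentially"
      using eventually_conj[OF eH' eventually_conj[OF eF' eventually_ge_at_top[of 1]]]
    proof (rule eventually_mono)
      fix n assume A: "(\<forall>i. \<forall>a\<in>clBN R. \<bar>(1 / real n) * (\<Sum>k=1..n. h i (zi \<phi> (a $ i) (Xs k \<omega>)) (Ys k \<omega>))
            - (\<integral>\<omega>'. h i (zi \<phi> (a $ i) (X \<omega>')) (Y \<omega>') \<partial>M)\<bar> < \<epsilon> n) \<and>
          (\<forall>p::'n \<times> 'd. \<forall>a\<in>clBN R. \<bar>(1 / real n) * (\<Sum>k=1..n. Fb J \<phi> a (Xs k \<omega>) (Ys k \<omega>) $ fst p $ snd p)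
            - (\<integral>\<omega>'. Fb J \<phi> a (X \<omega>') (Y \<omega>') $ fst p $ snd p \<partial>M)\<bar> < \<eta>F * \<epsilon> n) \<and> n \<ge> 1"
      show "\<omega> \<in> event_E M J h \<phi> X Y Xs Ys lam R (\<epsilon> n) n"
      proof (rule key[OF \<omega>])
        show "n \<ge> 1" using A by blast
        show "\<forall>i l. \<forall>a\<in>clBN R. \<bar>(1 / real n) * (\<Sum>k=1..n. Fb J \<phi> a (Xs k \<omega>) (Ys k \<omega>) $ i $ l)
            - (\<integral>\<omega>'. Fb J \<phi> a (X \<omega>') (Y \<omega>') $ i $ l \<partial>M)\<bar> < \<eta>F * \<epsilon> n"
        proof (intro allI)
          fix i l show "\<forall>a\<in>clBN R. \<bar>(1 / real n) * (\<Sum>k=1..n. Fb J \<phi> a (Xs k \<omega>) (Ys k \<omega>) $ i $ l)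
            - (\<integral>\<omega>'. Fb J \<phi> a (X \<omega>') (Y \<omega>') $ i $ l \<partial>M)\<bar> < \<eta>F * \<epsilon> n"
            using spec[OF A[THEN conjunct2, THEN conjunct1], of "(i, l)"] by simp
        qed
        show "\<forall>i. \<forall>a\<in>clBN R. \<bar>(1 / real n) * (\<Sum>k=1..n. h i (zi \<phi> (a $ i) (Xs k \<omega>)) (Ys k \<omega>))
            - (\<integral>\<omega>'. h i (zi \<phi> (a $ i) (X \<omega>')) (Y \<omega>') \<partial>M)\<bar> < \<epsilon> n"
          using A by blast
      qed
    qed
    thus "eventually (\<lambda>n. \<omega> \<in> event_E M J h \<phi> X Y Xs Ys lam R (\<epsilon>d * real n powr (- \<alpha>)) n) sequentially"
      unfolding \<epsilon>_def .
  qed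
  have part1: "AE \<omega> in M. \<not> (\<exists>\<^sub>F n in sequentially.
            \<omega> \<notin> event_E M J h \<phi> X Y Xs Ys lam R (\<epsilon>d * real n powr (- \<alpha>)) n)"
    using main by (simp add: not_frequently)
  from main obtain N where N: "{x \<in> space M. \<not> eventually (\<lambda>n. x \<in> event_E M J h \<phi> X Y Xs Ys lam R (\<epsilon>d * real n powr (- \<alpha>)) n) sequentially} \<subseteq> N"
    "emeasure M N = 0" "N \<in> sets M"
    by (rule AE_E)
  have part2: "\<exists>\<Omega>t \<in> sets M. measure M \<Omega>t = 1 \<and>
         (\<forall>\<omega>\<in>\<Omega>t. \<exists>n\<omega>::nat. n\<omega> \<ge> 1 \<and>
            (\<forall>n>n\<omega>. \<omega> \<in> event_E M J h \<phi> X Y Xs Ys lam R (\<epsilon>d * real n powr (- \<alpha>)) n))"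
  proof (intro bexI conjI ballI)
    show "space M - N \<in> sets M" using N(3) by auto
    have "measure M N = 0" using N(2) by (simp add: measure_def)
    thus "measure M (space M - N) = 1" using prob_compl[OF N(3)] by simp
    fix \<omega> assume "\<omega> \<in> space M - N"
    hence "eventually (\<lambda>n. \<omega> \<in> event_E M J h \<phi> X Y Xs Ys lam R (\<epsilon>d * real n powr (- \<alpha>)) n) sequentially"
      using N(1) by blast
    then obtain N0 where N0: "\<forall>n\<ge>N0. \<omega> \<in> event_E M J h \<phi> X Y Xs Ys lam R (\<epsilon>d * real n powr (- \<alpha>)) n"
      unfolding eventually_sequentially by blast
    show "\<exists>n\<omega>::nat. n\<omega> \<ge> 1 \<and> (\<forall>n>n\<omega>. \<omega> \<in> event_E M J h \<phi> X Y Xs Ys lam R (\<epsilon>d * real n powr (- \<alpha>)) n)"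
      by (rule exI[of _ "N0 + 1"]) (use N0 in auto)
  qed
  show ?thesis using part1 part2 by blast
qed

end
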